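(* For a semi-abelian category $\mathcal C$ the following are equivalent: (i) every composite of two normal monomorphisms in $\mathcal C$ is a normal monomorphism; (ii) in $\mathcal C$, every pushout of a normal monomorphism along a regular epimorphism is a monomorphism (necessarily normal).
   Context: Semi-abelian category: pointed, Barr-exact, protomodular, with binary coproducts. A normal monomorphism is a kernel of some morphism; a regular epimorphism is a coequaliser of some pair (in this context, a cokernel). *)

theory Defs
  imports Main
begin

record ('o, 'a) cat =
  Obj  :: "'o set"
  Arr  :: "'a set"
  Dom  :: "'a \<Rightarrow> 'o"
  Cod  :: "'a \<Rightarrow> 'o"
  Idt  :: "'o \<Rightarrow> 'a"
  Comp :: "'a \<Rightarrow> 'a \<Rightarrow> 'a"   (* Comp C g f = g o f, meaningful when Cod f = Dom g *)

definition hom :: "('o, 'a) cat \<Rightarrow> 'o \<Rightarrow> 'o \<Rightarrow> 'a set" where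
  "hom C x y = {f \<in> Arr C. Dom C f = x \<and> Cod C f = y}"

definition category :: "('o, 'a) cat \<Rightarrow> bool" where
  "category C \<longleftrightarrow>
     (\<forall>f \<in> Arr C. Dom C f \<in> Obj C \<and> Cod C f \<in> Obj C) \<and>
     (\<forall>x \<in> Obj C. Idt C x \<in> hom C x x) \<and>
     (\<forall>f \<in> Arr C. \<forall>g \<in> Arr C. Cod C f = Dom C g \<longrightarrow>
        Comp C g f \<in> hom C (Dom C f) (Cod C g)) \<and>
     (\<forall>f \<in> Arr C. \<forall>g \<in> Arr C. \<forall>h \<in> Arr C. Cod C f = Dom C g \<longrightarrow> Cod C g = Dom C h \<longrightarrow>
        Comp C h (Comp C g f) = Comp C (Comp C h g) f) \<and>
     (\<forall>f \<in> Arr C. Comp C f (Idt C (Dom C f)) = f \<and> Comp C (Idt C (Cod C f)) f = f)"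

definition cat_mono :: "('o, 'a) cat \<Rightarrow> 'a \<Rightarrow> bool" where
  "cat_mono C m \<longleftrightarrow> m \<in> Arr C \<and>
     (\<forall>x \<in> Obj C. \<forall>f \<in> hom C x (Dom C m). \<forall>g \<in> hom C x (Dom C m).
        Comp C m f = Comp C m g \<longrightarrow> f = g)"

definition iso :: "('o, 'a) cat \<Rightarrow> 'a \<Rightarrow> bool" where
  "iso C f \<longleftrightarrow> f \<in> Arr C \<and>
     (\<exists>g \<in> hom C (Cod C f) (Dom C f).
        Comp C g f = Idt C (Dom C f) \<and> Comp C f g = Idt C (Cod C f))"

definition terminal_obj :: "('o, 'a) cat \<Rightarrow> 'o \<Rightarrow> bool" where
  "terminal_obj C z \<longleftrightarrow> z \<in> Obj C \<and> (\<forall>x \<in> Obj C. \<exists>!f. f \<in> hom C x z)"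

definition initial_obj :: "('o, 'a) cat \<Rightarrow> 'o \<Rightarrow> bool" where
  "initial_obj C z \<longleftrightarrow> z \<in> Obj C \<and> (\<forall>x \<in> Obj C. \<exists>!f. f \<in> hom C z x)"

definition zero_obj :: "('o, 'a) cat \<Rightarrow> 'o \<Rightarrow> bool" where
  "zero_obj C z \<longleftrightarrow> terminal_obj C z \<and> initial_obj C z"

definition pointed :: "('o, 'a) cat \<Rightarrow> bool" where
  "pointed C \<longleftrightarrow> (\<exists>z. zero_obj C z)"

definition zero_arr :: "('o, 'a) cat \<Rightarrow> 'a \<Rightarrow> bool" where
  "zero_arr C f \<longleftrightarrow> f \<in> Arr C \<and>
     (\<exists>z u v. zero_obj C z \<and> u \<in> hom C (Dom C f) z \<and> v \<in> hom C z (Cod C f) \<and> f = Comp C v u)"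

definition is_kernel :: "('o, 'a) cat \<Rightarrow> 'a \<Rightarrow> 'a \<Rightarrow> bool" where
  "is_kernel C k f \<longleftrightarrow> k \<in> Arr C \<and> f \<in> Arr C \<and> Cod C k = Dom C f \<and> zero_arr C (Comp C f k) \<and>
     (\<forall>g \<in> Arr C. Cod C g = Dom C f \<and> zero_arr C (Comp C f g) \<longrightarrow>
        (\<exists>!h. h \<in> hom C (Dom C g) (Dom C k) \<and> Comp C k h = g))"

definition normal_mono :: "('o, 'a) cat \<Rightarrow> 'a \<Rightarrow> bool" where
  "normal_mono C k \<longleftrightarrow> (\<exists>f. is_kernel C k f)"

definition is_coequalizer :: "('o, 'a) cat \<Rightarrow> 'a \<Rightarrow> 'a \<Rightarrow> 'a \<Rightarrow> bool" where
  "is_coequalizer C e u v \<longleftrightarrow> u \<in> Arr C \<and> v \<in> Arr C \<and> e \<in> Arr C \<and>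
     Dom C u = Dom C v \<and> Cod C u = Cod C v \<and> Dom C e = Cod C u \<and>
     Comp C e u = Comp C e v \<and>
     (\<forall>g \<in> Arr C. Dom C g = Cod C u \<and> Comp C g u = Comp C g v \<longrightarrow>
        (\<exists>!h. h \<in> hom C (Cod C e) (Cod C g) \<and> Comp C h e = g))"

definition regular_epi :: "('o, 'a) cat \<Rightarrow> 'a \<Rightarrow> bool" where
  "regular_epi C e \<longleftrightarrow> (\<exists>u v. is_coequalizer C e u v)"

definition is_pullback :: "('o, 'a) cat \<Rightarrow> 'a \<Rightarrow> 'a \<Rightarrow> 'a \<Rightarrow> 'a \<Rightarrow> bool" where
  "is_pullback C f g p q \<longleftrightarrow> f \<in> Arr C \<and> g \<in> Arr C \<and> p \<in> Arr C \<and> q \<in> Arr C \<and>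
     Cod C f = Cod C g \<and> Cod C p = Dom C f \<and> Cod C q = Dom C g \<and> Dom C p = Dom C q \<and>
     Comp C f p = Comp C g q \<and>
     (\<forall>x \<in> Obj C. \<forall>u \<in> hom C x (Dom C f). \<forall>v \<in> hom C x (Dom C g).
        Comp C f u = Comp C g v \<longrightarrow>
        (\<exists>!h. h \<in> hom C x (Dom C p) \<and> Comp C p h = u \<and> Comp C q h = v))"

text \<open>Pushout square: k : a \<rightarrow> b, e : a \<rightarrow> c, k' : c \<rightarrow> d, e' : b \<rightarrow> d, e' o k = k' o e
  (k' is the pushout of k along e).\<close>
definition is_pushout :: "('o, 'a) cat \<Rightarrow> 'a \<Rightarrow> 'a \<Rightarrow> 'a \<Rightarrow> 'a \<Rightarrow> bool" where
  "is_pushout C k e k' e' \<longleftrightarrow> k \<in> Arr C \<and> e \<in> Arr C \<and> k' \<in> Arr C \<and> e' \<in> Arr C \<and>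
     Dom C k = Dom C e \<and> Dom C k' = Cod C e \<and> Dom C e' = Cod C k \<and> Cod C k' = Cod C e' \<and>
     Comp C e' k = Comp C k' e \<and>
     (\<forall>x \<in> Obj C. \<forall>u \<in> hom C (Cod C k) x. \<forall>v \<in> hom C (Cod C e) x.
        Comp C u k = Comp C v e \<longrightarrow>
        (\<exists>!h. h \<in> hom C (Cod C k') x \<and> Comp C h e' = u \<and> Comp C h k' = v))"

definition is_coproduct :: "('o, 'a) cat \<Rightarrow> 'a \<Rightarrow> 'a \<Rightarrow> bool" where
  "is_coproduct C i1 i2 \<longleftrightarrow> i1 \<in> Arr C \<and> i2 \<in> Arr C \<and> Cod C i1 = Cod C i2 \<and>
     (\<forall>x \<in> Obj C. \<forall>u \<in> hom C (Dom C i1) x. \<forall>v \<in> hom C (Dom C i2) x.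
        (\<exists>!h. h \<in> hom C (Cod C i1) x \<and> Comp C h i1 = u \<and> Comp C h i2 = v))"

definition has_binary_coproducts :: "('o, 'a) cat \<Rightarrow> bool" where
  "has_binary_coproducts C \<longleftrightarrow>
     (\<forall>x \<in> Obj C. \<forall>y \<in> Obj C. \<exists>i1 i2. i1 \<in> hom C x (Cod C i1) \<and> i2 \<in> hom C y (Cod C i2) \<and>
        is_coproduct C i1 i2)"

definition finitely_complete :: "('o, 'a) cat \<Rightarrow> bool" where
  "finitely_complete C \<longleftrightarrow> (\<exists>t. terminal_obj C t) \<and>
     (\<forall>f \<in> Arr C. \<forall>g \<in> Arr C. Cod C f = Cod C g \<longrightarrow> (\<exists>p q. is_pullback C f g p q))"

definition regular_cat :: "('o, 'a) cat \<Rightarrow> bool" where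
  "regular_cat C \<longleftrightarrow> category C \<and> finitely_complete C \<and>
     (\<forall>f r1 r2. is_pullback C f f r1 r2 \<longrightarrow> (\<exists>e. is_coequalizer C e r1 r2)) \<and>
     (\<forall>f g p q. is_pullback C f g p q \<and> regular_epi C g \<longrightarrow> regular_epi C p)"

definition equiv_rel :: "('o, 'a) cat \<Rightarrow> 'a \<Rightarrow> 'a \<Rightarrow> bool" where
  "equiv_rel C r1 r2 \<longleftrightarrow> r1 \<in> Arr C \<and> r2 \<in> Arr C \<and>
     Dom C r1 = Dom C r2 \<and> Cod C r1 = Cod C r2 \<and>
     (\<forall>x \<in> Obj C. \<forall>u \<in> hom C x (Dom C r1). \<forall>v \<in> hom C x (Dom C r1).
        Comp C r1 u = Comp C r1 v \<and> Comp C r2 u = Comp C r2 v \<longrightarrow> u = v) \<and>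
     (\<exists>d \<in> hom C (Cod C r1) (Dom C r1).
        Comp C r1 d = Idt C (Cod C r1) \<and> Comp C r2 d = Idt C (Cod C r1)) \<and>
     (\<exists>s \<in> hom C (Dom C r1) (Dom C r1). Comp C r1 s = r2 \<and> Comp C r2 s = r1) \<and>
     (\<forall>p1 p2. is_pullback C r2 r1 p1 p2 \<longrightarrow>
        (\<exists>t \<in> hom C (Dom C p1) (Dom C r1).
           Comp C r1 t = Comp C r1 p1 \<and> Comp C r2 t = Comp C r2 p2))"

definition exact_cat :: "('o, 'a) cat \<Rightarrow> bool" where
  "exact_cat C \<longleftrightarrow> regular_cat C \<and>
     (\<forall>r1 r2. equiv_rel C r1 r2 \<longrightarrow> (\<exists>f. is_pullback C f f r1 r2))"

text \<open>Protomodularity (Bourn): every change-of-base functor between fibres of points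
  (split epimorphisms with chosen sections) along f : X \<rightarrow> Y reflects isomorphisms.\<close>
definition protomodular :: "('o, 'a) cat \<Rightarrow> bool" where
  "protomodular C \<longleftrightarrow>
     (\<forall>Y A B p s q t \<phi> f pA fA qB fB \<phi>'.
        p \<in> hom C A Y \<and> s \<in> hom C Y A \<and> Comp C p s = Idt C Y \<and>
        q \<in> hom C B Y \<and> t \<in> hom C Y B \<and> Comp C q t = Idt C Y \<and>
        \<phi> \<in> hom C A B \<and> Comp C q \<phi> = p \<and> Comp C \<phi> s = t \<and>
        f \<in> Arr C \<and> Cod C f = Y \<and>
        is_pullback C p f fA pA \<and> is_pullback C q f fB qB \<and>
        \<phi>' \<in> hom C (Dom C fA) (Dom C fB) \<and>
        Comp C fB \<phi>' = Comp C \<phi> fA \<and> Comp C qB \<phi>' = pA \<and>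
        iso C \<phi>'
        \<longrightarrow> iso C \<phi>)"

definition semi_abelian :: "('o, 'a) cat \<Rightarrow> bool" where
  "semi_abelian C \<longleftrightarrow> category C \<and> pointed C \<and> exact_cat C \<and> protomodular C \<and>
     has_binary_coproducts C"

end

theory Submission
  imports Defs
begin



locale sa =
  fixes C :: "('o, 'a) cat"
  assumes SA: "semi_abelian C"
begin

lemma cat: "category C" using SA by (simp add: semi_abelian_def)
lemma pointed: "pointed C" using SA by (simp add: semi_abelian_def)
lemma exact: "exact_cat C" using SA by (simp add: semi_abelian_def)
lemma regular: "regular_cat C" using exact by (simp add: exact_cat_def)
lemma fincomp: "finitely_complete C" using regular by (simp add: regular_cat_def)
lemma proto: "protomodular C" using SA by (simp add: semi_abelian_def)
lemma coprods: "has_binary_coproducts C" using SA by (simp add: semi_abelian_def)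

lemma homI: "f \<in> Arr C \<Longrightarrow> Dom C f = X \<Longrightarrow> Cod C f = Y \<Longrightarrow> f \<in> hom C X Y"
  by (simp add: hom_def)
lemma homD: "f \<in> hom C X Y \<Longrightarrow> f \<in> Arr C \<and> Dom C f = X \<and> Cod C f = Y"
  by (simp add: hom_def)
lemma homE[elim]: "f \<in> hom C X Y \<Longrightarrow> (f \<in> Arr C \<Longrightarrow> Dom C f = X \<Longrightarrow> Cod C f = Y \<Longrightarrow> P) \<Longrightarrow> P"
  by (simp add: hom_def)
lemma arr_hom: "f \<in> Arr C \<Longrightarrow> f \<in> hom C (Dom C f) (Cod C f)"
  by (simp add: hom_def)
lemma dom_obj: "f \<in> Arr C \<Longrightarrow> Dom C f \<in> Obj C" using cat by (simp add: category_def)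
lemma cod_obj: "f \<in> Arr C \<Longrightarrow> Cod C f \<in> Obj C" using cat by (simp add: category_def)
lemma hom_dom_obj: "f \<in> hom C X Y \<Longrightarrow> X \<in> Obj C" using dom_obj by (auto simp: hom_def)
lemma hom_cod_obj: "f \<in> hom C X Y \<Longrightarrow> Y \<in> Obj C" using cod_obj by (auto simp: hom_def)

lemma comp_hom[intro]: "f \<in> hom C X Y \<Longrightarrow> g \<in> hom C Y Z \<Longrightarrow> Comp C g f \<in> hom C X Z"
  using cat unfolding category_def hom_def by auto
lemma assoc: "f \<in> hom C X Y \<Longrightarrow> g \<in> hom C Y Z \<Longrightarrow> h \<in> hom C Z W \<Longrightarrow>
   Comp C h (Comp C g f) = Comp C (Comp C h g) f"
  using cat unfolding category_def hom_def by auto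
lemma id_hom[intro]: "X \<in> Obj C \<Longrightarrow> Idt C X \<in> hom C X X"
  using cat unfolding category_def by auto
lemma id_left[simp]: "f \<in> hom C X Y \<Longrightarrow> Comp C (Idt C Y) f = f"
  using cat unfolding category_def hom_def by auto
lemma id_right[simp]: "f \<in> hom C X Y \<Longrightarrow> Comp C f (Idt C X) = f"
  using cat unfolding category_def hom_def by auto

lemma monoD: "cat_mono C m \<Longrightarrow> m \<in> hom C Y Z \<Longrightarrow> f \<in> hom C X Y \<Longrightarrow> g \<in> hom C X Y \<Longrightarrow>
   Comp C m f = Comp C m g \<Longrightarrow> f = g"
  unfolding cat_mono_def using hom_dom_obj by (auto simp: hom_def)
lemma monoI: "m \<in> hom C Y Z \<Longrightarrow> (\<And>X f g. f \<in> hom C X Y \<Longrightarrow> g \<in> hom C X Y \<Longrightarrow>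
   Comp C m f = Comp C m g \<Longrightarrow> f = g) \<Longrightarrow> cat_mono C m"
  unfolding cat_mono_def by (auto simp: hom_def)

lemma mono_comp: "cat_mono C m \<Longrightarrow> cat_mono C n \<Longrightarrow> m \<in> hom C X Y \<Longrightarrow> n \<in> hom C Y Z \<Longrightarrow>
   cat_mono C (Comp C n m)"
proof (rule monoI[where Y=X and Z=Z])
  assume m: "cat_mono C m" "m \<in> hom C X Y" and n: "cat_mono C n" "n \<in> hom C Y Z"
  show "Comp C n m \<in> hom C X Z" using m n by blast
  fix W f g assume f: "f \<in> hom C W X" and g: "g \<in> hom C W X" and e: "Comp C (Comp C n m) f = Comp C (Comp C n m) g"
  have "Comp C n (Comp C m f) = Comp C n (Comp C m g)" using e assoc[OF f m(2) n(2)] assoc[OF g m(2) n(2)] by simp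
  then have "Comp C m f = Comp C m g" using monoD[OF n(1) n(2)] f g m(2) by blast
  then show "f = g" using monoD[OF m(1) m(2) f g] by blast
qed

lemma mono_cancel: "cat_mono C (Comp C n m) \<Longrightarrow> m \<in> hom C X Y \<Longrightarrow> n \<in> hom C Y Z \<Longrightarrow>
   cat_mono C m"
proof (rule monoI[where Y=X and Z=Y])
  assume nm: "cat_mono C (Comp C n m)" and m: "m \<in> hom C X Y" and n: "n \<in> hom C Y Z"
  show "m \<in> hom C X Y" by fact
  fix W f g assume f: "f \<in> hom C W X" and g: "g \<in> hom C W X" and e: "Comp C m f = Comp C m g"
  have "Comp C (Comp C n m) f = Comp C (Comp C n m) g" using e assoc[OF f m n] assoc[OF g m n] by simp
  then show "f = g" using monoD[OF nm _ f g] m n by blast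
qed

definition epi :: "'a \<Rightarrow> bool" where
  "epi e \<longleftrightarrow> e \<in> Arr C \<and> (\<forall>Z f g. f \<in> hom C (Cod C e) Z \<longrightarrow> g \<in> hom C (Cod C e) Z \<longrightarrow>
      Comp C f e = Comp C g e \<longrightarrow> f = g)"

lemma epiD: "epi e \<Longrightarrow> e \<in> hom C X Y \<Longrightarrow> f \<in> hom C Y Z \<Longrightarrow> g \<in> hom C Y Z \<Longrightarrow>
   Comp C f e = Comp C g e \<Longrightarrow> f = g"
  unfolding epi_def by (auto simp: hom_def)

lemma coeq_epi: "is_coequalizer C e u v \<Longrightarrow> epi e"
proof -
  assume H: "is_coequalizer C e u v"
  have e: "e \<in> Arr C" "u \<in> Arr C" "v \<in> Arr C" "Dom C e = Cod C u" "Comp C e u = Comp C e v"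
     "Dom C u = Dom C v" "Cod C u = Cod C v"
    using H unfolding is_coequalizer_def by auto
  have U: "\<And>g. g\<in>Arr C \<Longrightarrow> Dom C g = Cod C u \<Longrightarrow> Comp C g u = Comp C g v \<Longrightarrow> (\<exists>!h. h \<in> hom C (Cod C e) (Cod C g) \<and> Comp C h e = g)"
    using H unfolding is_coequalizer_def by blast
  show "epi e" unfolding epi_def
  proof (intro conjI allI impI)
    show "e \<in> Arr C" by fact
    fix Z f g
    assume f: "f \<in> hom C (Cod C e) Z" and g: "g \<in> hom C (Cod C e) Z" and fg: "Comp C f e = Comp C g e"
    have eh: "e \<in> hom C (Cod C u) (Cod C e)" using e by (simp add: hom_def)
    have uh: "u \<in> hom C (Dom C u) (Cod C u)" "v \<in> hom C (Dom C u) (Cod C u)" using e by (auto simp: hom_def)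
    have feh: "Comp C f e \<in> hom C (Cod C u) Z" using eh f by (rule comp_hom)
    then have fe: "Comp C f e \<in> Arr C" "Dom C (Comp C f e) = Cod C u" "Cod C (Comp C f e) = Z"
      by (auto simp: hom_def)
    have "Comp C (Comp C f e) u = Comp C (Comp C f e) v"
      using assoc[OF uh(1) eh f] assoc[OF uh(2) eh f] e(5) by simp
    then have "\<exists>!h. h \<in> hom C (Cod C e) (Cod C (Comp C f e)) \<and> Comp C h e = Comp C f e" using U fe(1,2) by blast
    then have "\<exists>!h. h \<in> hom C (Cod C e) Z \<and> Comp C h e = Comp C f e" using fe(3) by simp
    then show "f = g" using f g fg by metis
  qed
qed

lemma regepi_epi: "regular_epi C e \<Longrightarrow> epi e"
  unfolding regular_epi_def using coeq_epi by blast

lemma epi_comp: "epi e1 \<Longrightarrow> epi e2 \<Longrightarrow> e1 \<in> hom C X Y \<Longrightarrow> e2 \<in> hom C Y Z \<Longrightarrow> epi (Comp C e2 e1)"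
proof -
  assume e1: "epi e1" "e1 \<in> hom C X Y" and e2: "epi e2" "e2 \<in> hom C Y Z"
  have c: "Comp C e2 e1 \<in> hom C X Z" using e1 e2 by blast
  show ?thesis unfolding epi_def
  proof (intro conjI allI impI)
    show "Comp C e2 e1 \<in> Arr C" using c by blast
    fix W f g assume f: "f \<in> hom C (Cod C (Comp C e2 e1)) W" and g: "g \<in> hom C (Cod C (Comp C e2 e1)) W"
      and e: "Comp C f (Comp C e2 e1) = Comp C g (Comp C e2 e1)"
    have f': "f \<in> hom C Z W" and g': "g \<in> hom C Z W" using f g c by (auto simp: hom_def)
    have "Comp C (Comp C f e2) e1 = Comp C (Comp C g e2) e1" using e assoc[OF e1(2) e2(2) f'] assoc[OF e1(2) e2(2) g'] by simp
    then have "Comp C f e2 = Comp C g e2" using epiD[OF e1] e2(2) f' g' by blast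
    then show "f = g" using epiD[OF e2 f' g'] by blast
  qed
qed

definition z0 where "z0 = (SOME z. zero_obj C z)"
lemma z0: "zero_obj C z0" using pointed unfolding pointed_def z0_def by (metis someI)
lemma z0_obj[simp]: "z0 \<in> Obj C" using z0 by (simp add: zero_obj_def terminal_obj_def)

lemma zero_to: "zero_obj C z \<Longrightarrow> X \<in> Obj C \<Longrightarrow> \<exists>!f. f \<in> hom C X z"
  by (simp add: zero_obj_def terminal_obj_def)
lemma zero_from: "zero_obj C z \<Longrightarrow> X \<in> Obj C \<Longrightarrow> \<exists>!f. f \<in> hom C z X"
  by (simp add: zero_obj_def initial_obj_def)

definition zm where "zm X Y = Comp C (SOME v. v \<in> hom C z0 Y) (SOME u. u \<in> hom C X z0)"

lemma zm_hom[intro]: "X \<in> Obj C \<Longrightarrow> Y \<in> Obj C \<Longrightarrow> zm X Y \<in> hom C X Y"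
proof -
  assume X: "X \<in> Obj C" and Y: "Y \<in> Obj C"
  have "(SOME v. v \<in> hom C z0 Y) \<in> hom C z0 Y" using zero_from[OF z0 Y] by (metis someI)
  moreover have "(SOME u. u \<in> hom C X z0) \<in> hom C X z0" using zero_to[OF z0 X] by (metis someI)
  ultimately show ?thesis unfolding zm_def by blast
qed

lemma factor_zero: "zero_obj C z \<Longrightarrow> u \<in> hom C X z \<Longrightarrow> v \<in> hom C z Y \<Longrightarrow> Comp C v u = zm X Y"
proof -
  assume z: "zero_obj C z" and u: "u \<in> hom C X z" and v: "v \<in> hom C z Y"
  have X: "X \<in> Obj C" using u hom_dom_obj by blast
  have Y: "Y \<in> Obj C" using v hom_cod_obj by blast
  have zO: "z \<in> Obj C" using u hom_cod_obj by blast
  define v0 where "v0 = (SOME v. v \<in> hom C z0 Y)"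
  define u0 where "u0 = (SOME u. u \<in> hom C X z0)"
  have v0: "v0 \<in> hom C z0 Y" using zero_from[OF z0 Y] unfolding v0_def by (metis someI)
  have u0: "u0 \<in> hom C X z0" using zero_to[OF z0 X] unfolding u0_def by (metis someI)
  obtain w where w: "w \<in> hom C z z0" using zero_to[OF z0 zO] by blast
  have "Comp C w u = u0" using zero_to[OF z0 X] u0 comp_hom[OF u w] by blast
  moreover have "Comp C v0 w = v" using zero_from[OF z Y] v comp_hom[OF w v0] by blast
  ultimately have "Comp C v u = Comp C v0 u0" using assoc[OF u w v0] by simp
  then show ?thesis unfolding zm_def u0_def v0_def by simp
qed

lemma zero_arr_iff: "zero_arr C f \<longleftrightarrow> f \<in> Arr C \<and> f = zm (Dom C f) (Cod C f)"
proof
  assume "zero_arr C f" then show "f \<in> Arr C \<and> f = zm (Dom C f) (Cod C f)"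
    unfolding zero_arr_def using factor_zero by blast
next
  assume f: "f \<in> Arr C \<and> f = zm (Dom C f) (Cod C f)"
  define v0 where "v0 = (SOME v. v \<in> hom C z0 (Cod C f))"
  define u0 where "u0 = (SOME u. u \<in> hom C (Dom C f) z0)"
  have v0: "v0 \<in> hom C z0 (Cod C f)" using zero_from[OF z0 cod_obj] f unfolding v0_def by (metis someI)
  have u0: "u0 \<in> hom C (Dom C f) z0" using zero_to[OF z0 dom_obj] f unfolding u0_def by (metis someI)
  show "zero_arr C f" unfolding zero_arr_def using f z0 u0 v0 unfolding zm_def u0_def v0_def by blast
qed

lemma zm_zero: "X \<in> Obj C \<Longrightarrow> Y \<in> Obj C \<Longrightarrow> zero_arr C (zm X Y)"
  using zero_arr_iff zm_hom by (metis homD)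

lemma zero_arr_hom: "f \<in> hom C X Y \<Longrightarrow> zero_arr C f \<longleftrightarrow> f = zm X Y"
  using zero_arr_iff by (auto simp: hom_def)

lemma zm_comp_left[simp]: "g \<in> hom C Y Z \<Longrightarrow> X \<in> Obj C \<Longrightarrow> Comp C g (zm X Y) = zm X Z"
proof -
  assume g: "g \<in> hom C Y Z" and X: "X \<in> Obj C"
  have Y: "Y \<in> Obj C" using g hom_dom_obj by blast
  define v0 where "v0 = (SOME v. v \<in> hom C z0 Y)"
  define u0 where "u0 = (SOME u. u \<in> hom C X z0)"
  have v0: "v0 \<in> hom C z0 Y" using zero_from[OF z0 Y] unfolding v0_def by (metis someI)
  have u0: "u0 \<in> hom C X z0" using zero_to[OF z0 X] unfolding u0_def by (metis someI)
  have "Comp C g (zm X Y) = Comp C (Comp C g v0) u0" unfolding zm_def u0_def[symmetric] v0_def[symmetric]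
    using assoc[OF u0 v0 g] by simp
  also have "\<dots> = zm X Z" using factor_zero[OF z0 u0] v0 g by blast
  finally show ?thesis .
qed

lemma zm_comp_right[simp]: "f \<in> hom C X Y \<Longrightarrow> Z \<in> Obj C \<Longrightarrow> Comp C (zm Y Z) f = zm X Z"
proof -
  assume f: "f \<in> hom C X Y" and Z: "Z \<in> Obj C"
  have Y: "Y \<in> Obj C" using f hom_cod_obj by blast
  define v0 where "v0 = (SOME v. v \<in> hom C z0 Z)"
  define u0 where "u0 = (SOME u. u \<in> hom C Y z0)"
  have v0: "v0 \<in> hom C z0 Z" using zero_from[OF z0 Z] unfolding v0_def by (metis someI)
  have u0: "u0 \<in> hom C Y z0" using zero_to[OF z0 Y] unfolding u0_def by (metis someI)
  have "Comp C (zm Y Z) f = Comp C v0 (Comp C u0 f)" unfolding zm_def u0_def[symmetric] v0_def[symmetric]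
    using assoc[OF f u0 v0] by simp
  also have "\<dots> = zm X Z" using factor_zero[OF z0 _ v0] u0 f by blast
  finally show ?thesis .
qed

lemma mono_zero: "cat_mono C m \<Longrightarrow> m \<in> hom C Y Z \<Longrightarrow> f \<in> hom C X Y \<Longrightarrow>
   Comp C m f = zm X Z \<Longrightarrow> f = zm X Y"
proof -
  assume m: "cat_mono C m" "m \<in> hom C Y Z" and f: "f \<in> hom C X Y" and e: "Comp C m f = zm X Z"
  have X: "X \<in> Obj C" using f hom_dom_obj by blast
  have Y: "Y \<in> Obj C" using f hom_cod_obj by blast
  have "Comp C m (zm X Y) = zm X Z" using m(2) X by simp
  then show ?thesis using monoD[OF m f zm_hom[OF X Y]] e by simp
qed

lemma epi_zero: "epi e \<Longrightarrow> e \<in> hom C X Y \<Longrightarrow> f \<in> hom C Y Z \<Longrightarrow>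
   Comp C f e = zm X Z \<Longrightarrow> f = zm Y Z"
proof -
  assume m: "epi e" "e \<in> hom C X Y" and f: "f \<in> hom C Y Z" and e: "Comp C f e = zm X Z"
  have Z: "Z \<in> Obj C" using f hom_cod_obj by blast
  have Y: "Y \<in> Obj C" using f hom_dom_obj by blast
  have "Comp C (zm Y Z) e = zm X Z" using m(2) Z by simp
  then show ?thesis using epiD[OF m f zm_hom[OF Y Z]] e by simp
qed

end


context sa begin

lemma pb_exists: "f \<in> hom C X Z \<Longrightarrow> g \<in> hom C Y Z \<Longrightarrow>
  \<exists>P p q. is_pullback C f g p q \<and> p \<in> hom C P X \<and> q \<in> hom C P Y"
proof -
  assume f: "f \<in> hom C X Z" and g: "g \<in> hom C Y Z"
  have "\<exists>p q. is_pullback C f g p q" using f g fincomp unfolding finitely_complete_def hom_def by auto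
  then obtain p q where pb: "is_pullback C f g p q" by blast
  then have "p \<in> hom C (Dom C p) X \<and> q \<in> hom C (Dom C p) Y" using f g unfolding is_pullback_def hom_def by auto
  then show ?thesis using pb by blast
qed

lemma pb_comm: "is_pullback C f g p q \<Longrightarrow> Comp C f p = Comp C g q"
  unfolding is_pullback_def by auto

lemma pb_ex: "is_pullback C f g p q \<Longrightarrow> f \<in> hom C X Z \<Longrightarrow> g \<in> hom C Y Z \<Longrightarrow> p \<in> hom C P X \<Longrightarrow>
   u \<in> hom C W X \<Longrightarrow> v \<in> hom C W Y \<Longrightarrow> Comp C f u = Comp C g v \<Longrightarrow>
   \<exists>h. h \<in> hom C W P \<and> Comp C p h = u \<and> Comp C q h = v"
proof -
  assume pb: "is_pullback C f g p q" and f: "f \<in> hom C X Z" and g: "g \<in> hom C Y Z" and p: "p \<in> hom C P X"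
    and u: "u \<in> hom C W X" and v: "v \<in> hom C W Y" and e: "Comp C f u = Comp C g v"
  have W: "W \<in> Obj C" using u hom_dom_obj by blast
  have U: "\<forall>x \<in> Obj C. \<forall>u \<in> hom C x (Dom C f). \<forall>v \<in> hom C x (Dom C g).
        Comp C f u = Comp C g v \<longrightarrow> (\<exists>!h. h \<in> hom C x (Dom C p) \<and> Comp C p h = u \<and> Comp C q h = v)"
    using pb unfolding is_pullback_def by blast
  have "\<exists>!h. h \<in> hom C W (Dom C p) \<and> Comp C p h = u \<and> Comp C q h = v"
    using U W u v e f g by (auto simp: hom_def)
  then show ?thesis using p by (auto simp: hom_def)
qed

lemma pb_un: "is_pullback C f g p q \<Longrightarrow> p \<in> hom C P X \<Longrightarrow> h1 \<in> hom C W P \<Longrightarrow> h2 \<in> hom C W P \<Longrightarrow>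
   Comp C p h1 = Comp C p h2 \<Longrightarrow> Comp C q h1 = Comp C q h2 \<Longrightarrow> h1 = h2"
proof -
  assume pb: "is_pullback C f g p q" and p: "p \<in> hom C P X" and h1: "h1 \<in> hom C W P" and h2: "h2 \<in> hom C W P"
    and e1: "Comp C p h1 = Comp C p h2" and e2: "Comp C q h1 = Comp C q h2"
  have W: "W \<in> Obj C" using h1 hom_dom_obj by blast
  have U: "\<forall>x \<in> Obj C. \<forall>u \<in> hom C x (Dom C f). \<forall>v \<in> hom C x (Dom C g).
        Comp C f u = Comp C g v \<longrightarrow> (\<exists>!h. h \<in> hom C x (Dom C p) \<and> Comp C p h = u \<and> Comp C q h = v)"
    using pb unfolding is_pullback_def by blast
  have pq: "p \<in> Arr C" "q \<in> Arr C" "Cod C p = Dom C f" "Cod C q = Dom C g" "Dom C p = Dom C q" "Comp C f p = Comp C g q"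
    "f \<in> Arr C" "g \<in> Arr C"
    using pb unfolding is_pullback_def by auto
  have qh: "q \<in> hom C P (Dom C g)" using pq p by (auto simp: hom_def)
  have qh1: "Comp C q h1 \<in> hom C W (Dom C g)" using qh h1 by blast
  have fh: "f \<in> hom C (Dom C f) (Cod C f)" "g \<in> hom C (Dom C g) (Cod C g)" using pq by (auto simp: hom_def)
  have pf: "p \<in> hom C P (Dom C f)" using p pq by (auto simp: hom_def)
  have ph: "Comp C p h1 \<in> hom C W (Dom C f)" using comp_hom[OF h1 pf] .
  have "Comp C f (Comp C p h1) = Comp C g (Comp C q h1)"
    using assoc[OF h1 pf fh(1)] assoc[OF h1 qh fh(2)] pq(6) by simp
  then have "\<exists>!h. h \<in> hom C W (Dom C p) \<and> Comp C p h = Comp C p h1 \<and> Comp C q h = Comp C q h1"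
    using U[rule_format, OF W ph qh1] by blast
  then show ?thesis using h1 h2 e1 e2 p by (auto simp: hom_def)
qed

definition is_prod where
  "is_prod p1 p2 P X Y \<longleftrightarrow> p1 \<in> hom C P X \<and> p2 \<in> hom C P Y \<and>
     (\<forall>W u v. u \<in> hom C W X \<longrightarrow> v \<in> hom C W Y \<longrightarrow> (\<exists>h \<in> hom C W P. Comp C p1 h = u \<and> Comp C p2 h = v)) \<and>
     (\<forall>W h1 h2. h1 \<in> hom C W P \<longrightarrow> h2 \<in> hom C W P \<longrightarrow> Comp C p1 h1 = Comp C p1 h2 \<longrightarrow> Comp C p2 h1 = Comp C p2 h2 \<longrightarrow> h1 = h2)"

lemma to_z0_unique: "f \<in> hom C X z0 \<Longrightarrow> g \<in> hom C X z0 \<Longrightarrow> f = g"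
  using zero_to[OF z0] hom_dom_obj by blast

lemma prod_exists: "X \<in> Obj C \<Longrightarrow> Y \<in> Obj C \<Longrightarrow> \<exists>P p1 p2. is_prod p1 p2 P X Y"
proof -
  assume X: "X \<in> Obj C" and Y: "Y \<in> Obj C"
  obtain tX where tX: "tX \<in> hom C X z0" using zero_to[OF z0 X] by blast
  obtain tY where tY: "tY \<in> hom C Y z0" using zero_to[OF z0 Y] by blast
  obtain P p1 p2 where pb: "is_pullback C tX tY p1 p2" and p1: "p1 \<in> hom C P X" and p2: "p2 \<in> hom C P Y"
    using pb_exists[OF tX tY] by blast
  have "is_prod p1 p2 P X Y" unfolding is_prod_def
  proof (intro conjI allI impI)
    show "p1 \<in> hom C P X" "p2 \<in> hom C P Y" by fact+
    fix W u v assume u: "u \<in> hom C W X" and v: "v \<in> hom C W Y"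
    have "Comp C tX u = Comp C tY v" using to_z0_unique u v tX tY by blast
    then show "\<exists>h\<in>hom C W P. Comp C p1 h = u \<and> Comp C p2 h = v" using pb_ex[OF pb tX tY p1 u v] by blast
  next
    fix W h1 h2 assume "h1 \<in> hom C W P" "h2 \<in> hom C W P" "Comp C p1 h1 = Comp C p1 h2" "Comp C p2 h1 = Comp C p2 h2"
    then show "h1 = h2" using pb_un[OF pb p1] by blast
  qed
  then show ?thesis by blast
qed

lemma eq_exists: "g1 \<in> hom C A Z \<Longrightarrow> g2 \<in> hom C A Z \<Longrightarrow>
  \<exists>E e. e \<in> hom C E A \<and> cat_mono C e \<and> Comp C g1 e = Comp C g2 e \<and>
     (\<forall>W x. x \<in> hom C W A \<longrightarrow> Comp C g1 x = Comp C g2 x \<longrightarrow> (\<exists>h \<in> hom C W E. Comp C e h = x))"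
proof -
  assume g1: "g1 \<in> hom C A Z" and g2: "g2 \<in> hom C A Z"
  have A: "A \<in> Obj C" and Z: "Z \<in> Obj C" using g1 hom_dom_obj hom_cod_obj by blast+
  obtain P p1 p2 where pr: "is_prod p1 p2 P A Z" using prod_exists[OF A Z] by blast
  have p1: "p1 \<in> hom C P A" and p2: "p2 \<in> hom C P Z" using pr unfolding is_prod_def by auto
  have IA: "Idt C A \<in> hom C A A" using A by blast
  obtain a1 where a1: "a1 \<in> hom C A P" "Comp C p1 a1 = Idt C A" "Comp C p2 a1 = g1"
    using pr IA g1 unfolding is_prod_def by blast
  obtain a2 where a2: "a2 \<in> hom C A P" "Comp C p1 a2 = Idt C A" "Comp C p2 a2 = g2"
    using pr IA g2 unfolding is_prod_def by blast
  obtain E e q where pb: "is_pullback C a1 a2 e q" and e: "e \<in> hom C E A" and q: "q \<in> hom C E A"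
    using pb_exists[OF a1(1) a2(1)] by blast
  have c: "Comp C a1 e = Comp C a2 q" using pb_comm[OF pb] .
  have "Comp C (Comp C p1 a1) e = Comp C (Comp C p1 a2) q" using assoc[OF e a1(1) p1] assoc[OF q a2(1) p1] c by simp
  then have eq: "e = q" using a1 a2 e q by simp
  have "Comp C (Comp C p2 a1) e = Comp C (Comp C p2 a2) q" using assoc[OF e a1(1) p2] assoc[OF q a2(1) p2] c by simp
  then have ge: "Comp C g1 e = Comp C g2 e" using a1 a2 eq by simp
  have mono: "cat_mono C e"
  proof (rule monoI[OF e])
    fix W h1 h2 assume h: "h1 \<in> hom C W E" "h2 \<in> hom C W E" "Comp C e h1 = Comp C e h2"
    then show "h1 = h2" using pb_un[OF pb e] eq by blast
  qed
  have univ: "\<forall>W x. x \<in> hom C W A \<longrightarrow> Comp C g1 x = Comp C g2 x \<longrightarrow> (\<exists>h \<in> hom C W E. Comp C e h = x)"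
  proof (intro allI impI)
    fix W x assume x: "x \<in> hom C W A" and gx: "Comp C g1 x = Comp C g2 x"
    have ax: "Comp C a1 x \<in> hom C W P" "Comp C a2 x \<in> hom C W P" using x a1 a2 by blast+
    have "Comp C p1 (Comp C a1 x) = Comp C p1 (Comp C a2 x)" using assoc[OF x a1(1) p1] assoc[OF x a2(1) p1] a1 a2 by simp
    moreover have "Comp C p2 (Comp C a1 x) = Comp C p2 (Comp C a2 x)" using assoc[OF x a1(1) p2] assoc[OF x a2(1) p2] a1 a2 gx by simp
    ultimately have "Comp C a1 x = Comp C a2 x" using pr ax unfolding is_prod_def by blast
    then show "\<exists>h \<in> hom C W E. Comp C e h = x" using pb_ex[OF pb a1(1) a2(1) e x x] by blast
  qed
  show ?thesis using e mono ge univ by blast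
qed

lemma is_kernelD: "is_kernel C k f \<Longrightarrow> k \<in> hom C K X \<Longrightarrow> f \<in> hom C X Y \<Longrightarrow>
   Comp C f k = zm K Y \<and> (\<forall>W g. g \<in> hom C W X \<longrightarrow> Comp C f g = zm W Y \<longrightarrow> (\<exists>h \<in> hom C W K. Comp C k h = g))"
proof -
  assume ker: "is_kernel C k f" and k: "k \<in> hom C K X" and f: "f \<in> hom C X Y"
  have "zero_arr C (Comp C f k)" using ker unfolding is_kernel_def by blast
  then have z: "Comp C f k = zm K Y" using zero_arr_hom comp_hom[OF k f] by blast
  have U: "\<forall>g \<in> Arr C. Cod C g = Dom C f \<and> zero_arr C (Comp C f g) \<longrightarrow>
        (\<exists>!h. h \<in> hom C (Dom C g) (Dom C k) \<and> Comp C k h = g)" using ker unfolding is_kernel_def by blast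
  have "\<forall>W g. g \<in> hom C W X \<longrightarrow> Comp C f g = zm W Y \<longrightarrow> (\<exists>h \<in> hom C W K. Comp C k h = g)"
  proof (intro allI impI)
    fix W g assume g: "g \<in> hom C W X" and fg: "Comp C f g = zm W Y"
    have zz: "zero_arr C (Comp C f g)" using fg zero_arr_hom comp_hom[OF g f] by blast
    have gA: "g \<in> Arr C" "Cod C g = Dom C f" using g f by (auto simp: hom_def)
    have "\<exists>!h. h \<in> hom C (Dom C g) (Dom C k) \<and> Comp C k h = g" using U[rule_format, OF gA(1)] gA(2) zz by blast
    then show "\<exists>h \<in> hom C W K. Comp C k h = g" using g k by (auto simp: hom_def)
  qed
  then show ?thesis using z by blast
qed

lemma kernel_mono: "is_kernel C k f \<Longrightarrow> cat_mono C k"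
proof -
  assume ker: "is_kernel C k f"
  have ka: "k \<in> Arr C" and kf: "Cod C k = Dom C f" and fa: "f \<in> Arr C" using ker unfolding is_kernel_def by auto
  have U: "\<forall>g \<in> Arr C. Cod C g = Dom C f \<and> zero_arr C (Comp C f g) \<longrightarrow>
        (\<exists>!h. h \<in> hom C (Dom C g) (Dom C k) \<and> Comp C k h = g)" using ker unfolding is_kernel_def by blast
  have kh: "k \<in> hom C (Dom C k) (Cod C k)" using ka by (simp add: hom_def)
  have fh: "f \<in> hom C (Cod C k) (Cod C f)" using fa kf by (simp add: hom_def)
  have z: "Comp C f k = zm (Dom C k) (Cod C f)" using is_kernelD[OF ker kh fh] by blast
  show ?thesis
  proof (rule monoI[OF kh])
    fix W h1 h2 assume h1: "h1 \<in> hom C W (Dom C k)" and h2: "h2 \<in> hom C W (Dom C k)" and e: "Comp C k h1 = Comp C k h2"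
    have g: "Comp C k h1 \<in> hom C W (Cod C k)" using h1 kh by blast
    have "Comp C f (Comp C k h1) = zm W (Cod C f)" using assoc[OF h1 kh fh] z h1 fh hom_cod_obj by simp
    then have zz: "zero_arr C (Comp C f (Comp C k h1))" using zero_arr_hom comp_hom[OF g fh] by blast
    have gA: "Comp C k h1 \<in> Arr C" "Cod C (Comp C k h1) = Dom C f" using g kf by (auto simp: hom_def)
    have "\<exists>!h. h \<in> hom C (Dom C (Comp C k h1)) (Dom C k) \<and> Comp C k h = Comp C k h1"
      using U[rule_format, OF gA(1)] gA(2) zz by blast
    then show "h1 = h2" using h1 h2 e g by (auto simp: hom_def)
  qed
qed

lemma is_kernelI: "k \<in> hom C K X \<Longrightarrow> f \<in> hom C X Y \<Longrightarrow> cat_mono C k \<Longrightarrow> Comp C f k = zm K Y \<Longrightarrow>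
   (\<And>W g. g \<in> hom C W X \<Longrightarrow> Comp C f g = zm W Y \<Longrightarrow> \<exists>h \<in> hom C W K. Comp C k h = g) \<Longrightarrow> is_kernel C k f"
proof -
  assume k: "k \<in> hom C K X" and f: "f \<in> hom C X Y" and m: "cat_mono C k" and z: "Comp C f k = zm K Y"
    and U: "\<And>W g. g \<in> hom C W X \<Longrightarrow> Comp C f g = zm W Y \<Longrightarrow> \<exists>h \<in> hom C W K. Comp C k h = g"
  show ?thesis unfolding is_kernel_def
  proof (intro conjI ballI impI)
    show "k \<in> Arr C" "f \<in> Arr C" "Cod C k = Dom C f" using k f by (auto simp: hom_def)
    show "zero_arr C (Comp C f k)" using z zero_arr_hom comp_hom[OF k f] by blast
    fix g assume g: "g \<in> Arr C" and gg: "Cod C g = Dom C f \<and> zero_arr C (Comp C f g)"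
    have gh: "g \<in> hom C (Dom C g) X" using g gg f by (auto simp: hom_def)
    have "Comp C f g = zm (Dom C g) Y" using gg zero_arr_hom comp_hom[OF gh f] by blast
    then obtain h where h: "h \<in> hom C (Dom C g) K" "Comp C k h = g" using U gh by blast
    show "\<exists>!h. h \<in> hom C (Dom C g) (Dom C k) \<and> Comp C k h = g"
    proof
      show "h \<in> hom C (Dom C g) (Dom C k) \<and> Comp C k h = g" using h k by (auto simp: hom_def)
      fix h' assume "h' \<in> hom C (Dom C g) (Dom C k) \<and> Comp C k h' = g"
      then show "h' = h" using monoD[OF m k] h k by (auto simp: hom_def)
    qed
  qed
qed

lemma ker_exists: "f \<in> hom C X Y \<Longrightarrow> \<exists>K k. k \<in> hom C K X \<and> is_kernel C k f"
proof -
  assume f: "f \<in> hom C X Y"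
  have Y: "Y \<in> Obj C" using f hom_cod_obj by blast
  have zy: "zm z0 Y \<in> hom C z0 Y" using zm_hom[OF z0_obj Y] .
  obtain K p q where pb: "is_pullback C f (zm z0 Y) p q" and p: "p \<in> hom C K X" and q: "q \<in> hom C K z0"
    using pb_exists[OF f zy] by blast
  have K: "K \<in> Obj C" using p hom_dom_obj by blast
  have z: "Comp C f p = zm K Y" using pb_comm[OF pb] q Y by simp
  have m: "cat_mono C p"
  proof (rule monoI[OF p])
    fix W h1 h2 assume h: "h1 \<in> hom C W K" "h2 \<in> hom C W K" "Comp C p h1 = Comp C p h2"
    have "Comp C q h1 = Comp C q h2" using to_z0_unique h q by blast
    then show "h1 = h2" using pb_un[OF pb p] h by blast
  qed
  have "is_kernel C p f"
  proof (rule is_kernelI[OF p f m z])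
    fix W g assume g: "g \<in> hom C W X" and fg: "Comp C f g = zm W Y"
    have W: "W \<in> Obj C" using g hom_dom_obj by blast
    have zw: "zm W z0 \<in> hom C W z0" using zm_hom[OF W z0_obj] .
    have "Comp C (zm z0 Y) (zm W z0) = zm W Y" using zy W by simp
    then show "\<exists>h \<in> hom C W K. Comp C p h = g" using pb_ex[OF pb f zy p g zw] fg by auto
  qed
  then show ?thesis using p by blast
qed

lemma isoD: "iso C t \<Longrightarrow> t \<in> hom C X Y \<Longrightarrow> \<exists>s \<in> hom C Y X. Comp C s t = Idt C X \<and> Comp C t s = Idt C Y"
  unfolding iso_def by (auto simp: hom_def)

lemma isoI: "t \<in> hom C X Y \<Longrightarrow> s \<in> hom C Y X \<Longrightarrow> Comp C s t = Idt C X \<Longrightarrow> Comp C t s = Idt C Y \<Longrightarrow> iso C t"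
  unfolding iso_def by (auto simp: hom_def)

end


context sa begin

lemma jse_mono:
  assumes p: "p \<in> hom C A Y" and s: "s \<in> hom C Y A" and ps: "Comp C p s = Idt C Y"
    and f: "f \<in> hom C X Y" and pb: "is_pullback C p f f' p'" and f': "f' \<in> hom C P A" and p': "p' \<in> hom C P X"
    and t: "t \<in> hom C T A" and tm: "cat_mono C t" and s0: "s0 \<in> hom C Y T" and ts0: "Comp C t s0 = s"
    and g: "g \<in> hom C P T" and tg: "Comp C t g = f'"
  shows "iso C t"
proof -
  define q where "q = Comp C p t"
  have q: "q \<in> hom C T Y" unfolding q_def using t p by blast
  have qs0: "Comp C q s0 = Idt C Y" unfolding q_def using assoc[OF s0 t p] ts0 ps by simp
  obtain PT fA pA where pbT: "is_pullback C q f fA pA" and fA: "fA \<in> hom C PT T" and pA: "pA \<in> hom C PT X"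
    using pb_exists[OF q f] by blast
  have cT: "Comp C q fA = Comp C f pA" using pb_comm[OF pbT] .
  have cP: "Comp C p f' = Comp C f p'" using pb_comm[OF pb] .
  have tfA: "Comp C t fA \<in> hom C PT A" using fA t by blast
  have "Comp C p (Comp C t fA) = Comp C f pA" using assoc[OF fA t p] cT unfolding q_def by simp
  then obtain ph where ph: "ph \<in> hom C PT P" "Comp C f' ph = Comp C t fA" "Comp C p' ph = pA"
    using pb_ex[OF pb p f f' tfA pA] by blast
  have "Comp C q g = Comp C f p'" unfolding q_def using assoc[OF g t p] tg cP by simp
  then obtain ps' where ps': "ps' \<in> hom C P PT" "Comp C fA ps' = g" "Comp C pA ps' = p'"
    using pb_ex[OF pbT q f fA g p'] by blast
  have P: "P \<in> Obj C" using f' hom_dom_obj by blast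
  have PT: "PT \<in> Obj C" using fA hom_dom_obj by blast
  have c1: "Comp C ph ps' \<in> hom C P P" using ps'(1) ph(1) by blast
  have "Comp C f' (Comp C ph ps') = f'" using assoc[OF ps'(1) ph(1) f'] ph(2) assoc[OF ps'(1) fA t] ps'(2) tg by simp
  moreover have "Comp C p' (Comp C ph ps') = p'" using assoc[OF ps'(1) ph(1) p'] ph(3) ps'(3) by simp
  ultimately have e1: "Comp C ph ps' = Idt C P"
    using pb_un[OF pb f' c1 id_hom[OF P]] f' p' by simp
  have c2: "Comp C ps' ph \<in> hom C PT PT" using ps'(1) ph(1) by blast
  have gph: "Comp C g ph \<in> hom C PT T" using ph(1) g by blast
  have "Comp C t (Comp C g ph) = Comp C t fA" using assoc[OF ph(1) g t] tg ph(2) by simp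
  then have "Comp C g ph = fA" using monoD[OF tm t gph fA] by blast
  then have "Comp C fA (Comp C ps' ph) = fA" using assoc[OF ph(1) ps'(1) fA] ps'(2) by simp
  moreover have "Comp C pA (Comp C ps' ph) = pA" using assoc[OF ph(1) ps'(1) pA] ps'(3) ph(3) by simp
  ultimately have e2: "Comp C ps' ph = Idt C PT"
    using pb_un[OF pbT fA c2 id_hom[OF PT]] fA pA by simp
  have isoph: "iso C ph" using isoI[OF ph(1) ps'(1) e2 e1] .
  have fAdom: "Dom C fA = PT" and f'dom: "Dom C f' = P" using fA f' by (auto simp: hom_def)
  have fArr: "f \<in> Arr C" "Cod C f = Y" using f by (auto simp: hom_def)
  have phh: "ph \<in> hom C (Dom C fA) (Dom C f')" using ph(1) fAdom f'dom by simp
  have qt: "Comp C p t = q" unfolding q_def ..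
  note H = proto[unfolded protomodular_def, rule_format, where Y=Y and A=T and B=A and p=q and s=s0 and q=p and t=s and \<phi>=t and f=f and pA=pA and fA=fA and qB=p' and fB=f' and \<phi>'=ph]
  show "iso C t"
    apply (rule H)
    using q s0 qs0 p s ps t qt ts0 fArr pbT pb phh ph(2) ph(3) isoph by simp
qed

lemma jse_eq:
  assumes p: "p \<in> hom C A Y" and s: "s \<in> hom C Y A" and ps: "Comp C p s = Idt C Y"
    and f: "f \<in> hom C X Y" and pb: "is_pullback C p f f' p'" and f': "f' \<in> hom C P A" and p': "p' \<in> hom C P X"
    and g1: "g1 \<in> hom C A Z" and g2: "g2 \<in> hom C A Z"
    and e1: "Comp C g1 s = Comp C g2 s" and e2: "Comp C g1 f' = Comp C g2 f'"
  shows "g1 = g2"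
proof -
  obtain E e where e: "e \<in> hom C E A" "cat_mono C e" "Comp C g1 e = Comp C g2 e"
    and U: "\<forall>W x. x \<in> hom C W A \<longrightarrow> Comp C g1 x = Comp C g2 x \<longrightarrow> (\<exists>h \<in> hom C W E. Comp C e h = x)"
    using eq_exists[OF g1 g2] by blast
  obtain s0 where s0: "s0 \<in> hom C Y E" "Comp C e s0 = s" using U s e1 by blast
  obtain gg where gg: "gg \<in> hom C P E" "Comp C e gg = f'" using U f' e2 by blast
  have "iso C e" using jse_mono[OF p s ps f pb f' p' e(1) e(2) s0 gg] .
  then obtain e' where e': "e' \<in> hom C A E" "Comp C e e' = Idt C A" using isoD[OF _ e(1)] by blast
  have "g1 = Comp C g1 (Comp C e e')" using e' g1 by simp
  also have "\<dots> = Comp C (Comp C g1 e) e'" using assoc[OF e'(1) e(1) g1] .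
  also have "\<dots> = Comp C (Comp C g2 e) e'" using e(3) by simp
  also have "\<dots> = Comp C g2 (Comp C e e')" using assoc[OF e'(1) e(1) g2] by simp
  also have "\<dots> = g2" using e' g2 by simp
  finally show ?thesis .
qed

lemma kp_exists: "e \<in> hom C A E \<Longrightarrow> \<exists>R r1 r2 d. is_pullback C e e r1 r2 \<and> r1 \<in> hom C R A \<and> r2 \<in> hom C R A \<and>
    d \<in> hom C A R \<and> Comp C r1 d = Idt C A \<and> Comp C r2 d = Idt C A"
proof -
  assume e: "e \<in> hom C A E"
  obtain R r1 r2 where pb: "is_pullback C e e r1 r2" and r1: "r1 \<in> hom C R A" and r2: "r2 \<in> hom C R A"
    using pb_exists[OF e e] by blast
  have A: "A \<in> Obj C" using e hom_dom_obj by blast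
  obtain d where "d \<in> hom C A R" "Comp C r1 d = Idt C A" "Comp C r2 d = Idt C A"
    using pb_ex[OF pb e e r1 id_hom[OF A] id_hom[OF A]] by blast
  then show ?thesis using pb r1 r2 by blast
qed

lemma mono_by_kernel:
  assumes w: "w \<in> hom C E D"
    and K: "\<And>W x. x \<in> hom C W E \<Longrightarrow> Comp C w x = zm W D \<Longrightarrow> x = zm W E"
  shows "cat_mono C w"
proof -
  obtain R r1 r2 d where kp: "is_pullback C w w r1 r2" and r1: "r1 \<in> hom C R E" and r2: "r2 \<in> hom C R E"
    and d: "d \<in> hom C E R" "Comp C r1 d = Idt C E" "Comp C r2 d = Idt C E"
    using kp_exists[OF w] by blast
  have E: "E \<in> Obj C" using w hom_dom_obj by blast
  have D: "D \<in> Obj C" using w hom_cod_obj by blast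
  have f: "zm z0 E \<in> hom C z0 E" using zm_hom[OF z0_obj E] .
  obtain P f' p' where pb: "is_pullback C r2 (zm z0 E) f' p'" and f': "f' \<in> hom C P R" and p': "p' \<in> hom C P z0"
    using pb_exists[OF r2 f] by blast
  have P: "P \<in> Obj C" using f' hom_dom_obj by blast
  have r2f: "Comp C r2 f' = zm P E" using pb_comm[OF pb] p' E by simp
  have r1f': "Comp C r1 f' \<in> hom C P E" using f' r1 by blast
  have "Comp C w (Comp C r1 f') = Comp C w (Comp C r2 f')"
    using assoc[OF f' r1 w] assoc[OF f' r2 w] pb_comm[OF kp] by simp
  also have "\<dots> = zm P D" using r2f w P by simp
  finally have r1f: "Comp C r1 f' = zm P E" using K[OF r1f'] by blast
  have "r1 = r2" using jse_eq[OF r2 d(1) d(3) f pb f' p' r1 r2] d r1f r2f by simp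
  show ?thesis
  proof (rule monoI[OF w])
    fix W x y assume x: "x \<in> hom C W E" and y: "y \<in> hom C W E" and xy: "Comp C w x = Comp C w y"
    obtain h where "h \<in> hom C W R" "Comp C r1 h = x" "Comp C r2 h = y" using pb_ex[OF kp w w r1 x y xy] by blast
    then show "x = y" using \<open>r1 = r2\<close> by simp
  qed
qed

lemma coeqD: "is_coequalizer C e u v \<Longrightarrow> e \<in> hom C A E \<Longrightarrow>
   u \<in> hom C (Dom C u) A \<and> v \<in> hom C (Dom C u) A \<and> Comp C e u = Comp C e v \<and>
   (\<forall>Z g. g \<in> hom C A Z \<longrightarrow> Comp C g u = Comp C g v \<longrightarrow> (\<exists>h \<in> hom C E Z. Comp C h e = g))"
proof -
  assume H: "is_coequalizer C e u v" and e: "e \<in> hom C A E"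
  have a: "u \<in> Arr C" "v \<in> Arr C" "Dom C e = Cod C u" "Comp C e u = Comp C e v"
     "Dom C u = Dom C v" "Cod C u = Cod C v"
    using H unfolding is_coequalizer_def by auto
  have U: "\<And>g. g\<in>Arr C \<Longrightarrow> Dom C g = Cod C u \<Longrightarrow> Comp C g u = Comp C g v \<Longrightarrow> (\<exists>!h. h \<in> hom C (Cod C e) (Cod C g) \<and> Comp C h e = g)"
    using H unfolding is_coequalizer_def by blast
  have "\<forall>Z g. g \<in> hom C A Z \<longrightarrow> Comp C g u = Comp C g v \<longrightarrow> (\<exists>h \<in> hom C E Z. Comp C h e = g)"
  proof (intro allI impI)
    fix Z g assume g: "g \<in> hom C A Z" and gg: "Comp C g u = Comp C g v"
    have gA: "g \<in> Arr C" "Dom C g = Cod C u" "Cod C g = Z" using g e a by (auto simp: hom_def)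
    have "\<exists>!h. h \<in> hom C (Cod C e) (Cod C g) \<and> Comp C h e = g" using U[OF gA(1) gA(2) gg] .
    then show "\<exists>h \<in> hom C E Z. Comp C h e = g" using e gA(3) by (auto simp: hom_def)
  qed
  then show ?thesis using a e by (auto simp: hom_def)
qed

lemma regepi_coker_ker:
  assumes e: "e \<in> hom C A E" and re: "regular_epi C e" and j: "j \<in> hom C K A" and ker: "is_kernel C j e"
    and g: "g \<in> hom C A Z" and gj: "Comp C g j = zm K Z"
  shows "\<exists>h \<in> hom C E Z. Comp C h e = g"
proof -
  obtain u v where co: "is_coequalizer C e u v" using re unfolding regular_epi_def by blast
  note cd = coeqD[OF co e]
  obtain R r1 r2 d where kp: "is_pullback C e e r1 r2" and r1: "r1 \<in> hom C R A" and r2: "r2 \<in> hom C R A"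
    and d: "d \<in> hom C A R" "Comp C r1 d = Idt C A" "Comp C r2 d = Idt C A"
    using kp_exists[OF e] by blast
  have A: "A \<in> Obj C" using e hom_dom_obj by blast
  have E: "E \<in> Obj C" using e hom_cod_obj by blast
  have Z: "Z \<in> Obj C" using g hom_cod_obj by blast
  have f: "zm z0 A \<in> hom C z0 A" using zm_hom[OF z0_obj A] .
  obtain P f' p' where pb: "is_pullback C r2 (zm z0 A) f' p'" and f': "f' \<in> hom C P R" and p': "p' \<in> hom C P z0"
    using pb_exists[OF r2 f] by blast
  have P: "P \<in> Obj C" using f' hom_dom_obj by blast
  have r2f: "Comp C r2 f' = zm P A" using pb_comm[OF pb] p' A by simp
  have r1f': "Comp C r1 f' \<in> hom C P A" using f' r1 by blast
  have "Comp C e (Comp C r1 f') = Comp C e (Comp C r2 f')"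
    using assoc[OF f' r1 e] assoc[OF f' r2 e] pb_comm[OF kp] by simp
  also have "\<dots> = zm P E" using r2f e P by simp
  finally obtain y where y: "y \<in> hom C P K" "Comp C j y = Comp C r1 f'" using is_kernelD[OF ker j e] r1f' by blast
  have g1: "Comp C g r1 \<in> hom C R Z" and g2: "Comp C g r2 \<in> hom C R Z" using g r1 r2 by blast+
  have "Comp C (Comp C g r1) f' = Comp C g (Comp C j y)" using assoc[OF f' r1 g] y by simp
  also have "\<dots> = zm P Z" using assoc[OF y(1) j g] gj y(1) Z by simp
  also have "\<dots> = Comp C (Comp C g r2) f'" using assoc[OF f' r2 g] r2f g P by simp
  finally have ee2: "Comp C (Comp C g r1) f' = Comp C (Comp C g r2) f'" .
  have ee1: "Comp C (Comp C g r1) d = Comp C (Comp C g r2) d" using assoc[OF d(1) r1 g] assoc[OF d(1) r2 g] d by simp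
  have gr: "Comp C g r1 = Comp C g r2" using jse_eq[OF r2 d(1) d(3) f pb f' p' g1 g2 ee1 ee2] .
  have u: "u \<in> hom C (Dom C u) A" and v: "v \<in> hom C (Dom C u) A" and euv: "Comp C e u = Comp C e v" using cd by auto
  obtain a where a: "a \<in> hom C (Dom C u) R" "Comp C r1 a = u" "Comp C r2 a = v" using pb_ex[OF kp e e r1 u v euv] by blast
  have "Comp C g u = Comp C g v" using assoc[OF a(1) r1 g] assoc[OF a(1) r2 g] gr a by simp
  then show ?thesis using cd g by blast
qed

end


context sa begin

lemma regepi_pb: "is_pullback C f g p q \<Longrightarrow> regular_epi C g \<Longrightarrow> regular_epi C p"
  using regular unfolding regular_cat_def by blast

lemma image_fact: "g \<in> hom C X Z \<Longrightarrow> \<exists>I r i. r \<in> hom C X I \<and> i \<in> hom C I Z \<and> Comp C i r = g \<and>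
   regular_epi C r \<and> cat_mono C i"
proof -
  assume g: "g \<in> hom C X Z"
  obtain R r1 r2 where kp: "is_pullback C g g r1 r2" and r1: "r1 \<in> hom C R X" and r2: "r2 \<in> hom C R X"
    using pb_exists[OF g g] by blast
  obtain r where co: "is_coequalizer C r r1 r2" using regular kp unfolding regular_cat_def by blast
  have r: "r \<in> hom C X (Cod C r)" using co r1 unfolding is_coequalizer_def by (auto simp: hom_def)
  define I where "I = Cod C r"
  note r = r[folded I_def]
  note cd = coeqD[OF co r]
  obtain i where i: "i \<in> hom C I Z" "Comp C i r = g" using cd g pb_comm[OF kp] by blast
  have rr: "regular_epi C r" using co unfolding regular_epi_def by blast
  have re: "epi r" using coeq_epi[OF co] .
  have "cat_mono C i"
  proof (rule monoI[OF i(1)])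
    fix W x y assume x: "x \<in> hom C W I" and y: "y \<in> hom C W I" and ixy: "Comp C i x = Comp C i y"
    obtain W1 e1 x1 where pb1: "is_pullback C x r e1 x1" and e1: "e1 \<in> hom C W1 W" and x1: "x1 \<in> hom C W1 X"
      using pb_exists[OF x r] by blast
    have ye1: "Comp C y e1 \<in> hom C W1 I" using e1 y by blast
    obtain W2 e2 y2 where pb2: "is_pullback C (Comp C y e1) r e2 y2" and e2: "e2 \<in> hom C W2 W1" and y2: "y2 \<in> hom C W2 X"
      using pb_exists[OF ye1 r] by blast
    have ep1: "epi e1" using regepi_epi[OF regepi_pb[OF pb1 rr]] .
    have ep2: "epi e2" using regepi_epi[OF regepi_pb[OF pb2 rr]] .
    have c1: "Comp C x e1 = Comp C r x1" using pb_comm[OF pb1] .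
    have c2: "Comp C (Comp C y e1) e2 = Comp C r y2" using pb_comm[OF pb2] .
    have x1e2: "Comp C x1 e2 \<in> hom C W2 X" using e2 x1 by blast
    have "Comp C g (Comp C x1 e2) = Comp C (Comp C i r) (Comp C x1 e2)" using i(2) by simp
    also have "\<dots> = Comp C i (Comp C r (Comp C x1 e2))" using assoc[OF x1e2 r i(1)] by simp
    also have "\<dots> = Comp C i (Comp C (Comp C r x1) e2)" using assoc[OF e2 x1 r] by simp
    also have "\<dots> = Comp C i (Comp C x (Comp C e1 e2))" using c1 assoc[OF e2 e1 x] by simp
    also have "\<dots> = Comp C (Comp C i x) (Comp C e1 e2)" using assoc[OF comp_hom[OF e2 e1] x i(1)] .
    also have "\<dots> = Comp C (Comp C i y) (Comp C e1 e2)" using ixy by simp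
    also have "\<dots> = Comp C i (Comp C y (Comp C e1 e2))" using assoc[OF comp_hom[OF e2 e1] y i(1)] by simp
    also have "\<dots> = Comp C i (Comp C r y2)" using c2 assoc[OF e2 e1 y] by simp
    also have "\<dots> = Comp C g y2" using assoc[OF y2 r i(1)] i(2) by simp
    finally obtain k where k: "k \<in> hom C W2 R" "Comp C r1 k = Comp C x1 e2" "Comp C r2 k = y2"
      using pb_ex[OF kp g g r1 x1e2 y2] by blast
    have e12: "Comp C e1 e2 \<in> hom C W2 W" using e1 e2 by blast
    have "Comp C x (Comp C e1 e2) = Comp C r (Comp C x1 e2)" using assoc[OF e2 e1 x] c1 assoc[OF e2 x1 r] by simp
    also have "\<dots> = Comp C r (Comp C r1 k)" using k by simp
    also have "\<dots> = Comp C (Comp C r r1) k" using assoc[OF k(1) r1 r] .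
    also have "\<dots> = Comp C (Comp C r r2) k" using cd by simp
    also have "\<dots> = Comp C r y2" using assoc[OF k(1) r2 r] k by simp
    also have "\<dots> = Comp C y (Comp C e1 e2)" using c2 assoc[OF e2 e1 y] by simp
    finally show "x = y" using epiD[OF epi_comp[OF ep2 ep1 e2 e1] e12 x y] by blast
  qed
  then show ?thesis using r i rr by blast
qed

lemma coprod_ex: "X \<in> Obj C \<Longrightarrow> Y \<in> Obj C \<Longrightarrow> \<exists>S i1 i2. i1 \<in> hom C X S \<and> i2 \<in> hom C Y S \<and>
   (\<forall>Z u v. u \<in> hom C X Z \<longrightarrow> v \<in> hom C Y Z \<longrightarrow> (\<exists>h \<in> hom C S Z. Comp C h i1 = u \<and> Comp C h i2 = v)) \<and>
   (\<forall>Z h1 h2. h1 \<in> hom C S Z \<longrightarrow> h2 \<in> hom C S Z \<longrightarrow> Comp C h1 i1 = Comp C h2 i1 \<longrightarrow> Comp C h1 i2 = Comp C h2 i2 \<longrightarrow> h1 = h2)"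
proof -
  assume X: "X \<in> Obj C" and Y: "Y \<in> Obj C"
  obtain i1 i2 where ii: "i1 \<in> hom C X (Cod C i1)" "i2 \<in> hom C Y (Cod C i2)" and cp: "is_coproduct C i1 i2"
    using coprods X Y unfolding has_binary_coproducts_def by blast
  define S where "S = Cod C i1"
  have i1: "i1 \<in> hom C X S" and i2: "i2 \<in> hom C Y S" using ii cp unfolding S_def is_coproduct_def by auto
  have U: "\<forall>x \<in> Obj C. \<forall>u \<in> hom C (Dom C i1) x. \<forall>v \<in> hom C (Dom C i2) x.
        (\<exists>!h. h \<in> hom C (Cod C i1) x \<and> Comp C h i1 = u \<and> Comp C h i2 = v)" using cp unfolding is_coproduct_def by blast
  have d: "Dom C i1 = X" "Dom C i2 = Y" "Cod C i1 = S" using i1 i2 by (auto simp: hom_def S_def)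
  have A: "\<forall>Z u v. u \<in> hom C X Z \<longrightarrow> v \<in> hom C Y Z \<longrightarrow> (\<exists>h \<in> hom C S Z. Comp C h i1 = u \<and> Comp C h i2 = v)"
  proof (intro allI impI)
    fix Z u v assume u: "u \<in> hom C X Z" and v: "v \<in> hom C Y Z"
    have Z: "Z \<in> Obj C" using u hom_cod_obj by blast
    have u': "u \<in> hom C (Dom C i1) Z" and v': "v \<in> hom C (Dom C i2) Z" using u v d by auto
    have "\<exists>!h. h \<in> hom C (Cod C i1) Z \<and> Comp C h i1 = u \<and> Comp C h i2 = v" using U[rule_format, OF Z u' v'] .
    then show "\<exists>h \<in> hom C S Z. Comp C h i1 = u \<and> Comp C h i2 = v" using d by auto
  qed
  have B: "\<forall>Z h1 h2. h1 \<in> hom C S Z \<longrightarrow> h2 \<in> hom C S Z \<longrightarrow> Comp C h1 i1 = Comp C h2 i1 \<longrightarrow> Comp C h1 i2 = Comp C h2 i2 \<longrightarrow> h1 = h2"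
  proof (intro allI impI)
    fix Z h1 h2 assume h1: "h1 \<in> hom C S Z" and h2: "h2 \<in> hom C S Z" and e: "Comp C h1 i1 = Comp C h2 i1" "Comp C h1 i2 = Comp C h2 i2"
    have Z: "Z \<in> Obj C" using h1 hom_cod_obj by blast
    have u: "Comp C h1 i1 \<in> hom C (Dom C i1) Z" using i1 h1 d by auto
    have v: "Comp C h1 i2 \<in> hom C (Dom C i2) Z" using i2 h1 d by auto
    have "\<exists>!h. h \<in> hom C (Cod C i1) Z \<and> Comp C h i1 = Comp C h1 i1 \<and> Comp C h i2 = Comp C h1 i2"
      using U[rule_format, OF Z u v] .
    then show "h1 = h2" using h1 h2 e d by auto
  qed
  show ?thesis using i1 i2 A B by blast
qed

end


context sa begin

lemma difun:
  assumes s1: "s1 \<in> hom C I X" and s2: "s2 \<in> hom C I X"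
    and jm: "\<forall>W u v. u \<in> hom C W I \<longrightarrow> v \<in> hom C W I \<longrightarrow> Comp C s1 u = Comp C s1 v \<longrightarrow> Comp C s2 u = Comp C s2 v \<longrightarrow> u = v"
    and ra: "ra \<in> hom C W I" and rb: "rb \<in> hom C W I" and rc: "rc \<in> hom C W I"
    and eab: "Comp C s2 ra = Comp C s2 rb" and ebc: "Comp C s1 rb = Comp C s1 rc"
  shows "\<exists>r \<in> hom C W I. Comp C s1 r = Comp C s1 ra \<and> Comp C s2 r = Comp C s2 rc"
proof -
  have I: "I \<in> Obj C" using s1 hom_dom_obj by blast
  have X: "X \<in> Obj C" using s1 hom_cod_obj by blast
  obtain P1 q1 q2 where pb1: "is_pullback C s2 s2 q1 q2" and q1: "q1 \<in> hom C P1 I" and q2: "q2 \<in> hom C P1 I"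
    using pb_exists[OF s2 s2] by blast
  have P1: "P1 \<in> Obj C" using q1 hom_dom_obj by blast
  have sq2: "Comp C s1 q2 \<in> hom C P1 X" using q2 s1 by blast
  obtain D pi q3 where pbD: "is_pullback C (Comp C s1 q2) s1 pi q3" and pi: "pi \<in> hom C D P1" and q3: "q3 \<in> hom C D I"
    using pb_exists[OF sq2 s1] by blast
  have D: "D \<in> Obj C" using pi hom_dom_obj by blast
  have cD: "Comp C (Comp C s1 q2) pi = Comp C s1 q3" using pb_comm[OF pbD] .
  have "Comp C (Comp C s1 q2) (Idt C P1) = Comp C s1 q2" using sq2 by simp
  then obtain sg where sg: "sg \<in> hom C P1 D" "Comp C pi sg = Idt C P1" "Comp C q3 sg = q2"
    using pb_ex[OF pbD sq2 s1 pi id_hom[OF P1] q2] by blast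
  obtain f where f: "f \<in> hom C I P1" "Comp C q1 f = Idt C I" "Comp C q2 f = Idt C I"
    using pb_ex[OF pb1 s2 s2 q1 id_hom[OF I] id_hom[OF I]] by blast
  obtain PP f' p' where pbF: "is_pullback C pi f f' p'" and f': "f' \<in> hom C PP D" and p': "p' \<in> hom C PP I"
    using pb_exists[OF pi f(1)] by blast
  obtain XX pr1 pr2 where pr: "is_prod pr1 pr2 XX X X" using prod_exists[OF X X] by blast
  have pr1: "pr1 \<in> hom C XX X" and pr2: "pr2 \<in> hom C XX X" using pr unfolding is_prod_def by auto
  have prU: "\<And>W u v. u \<in> hom C W X \<Longrightarrow> v \<in> hom C W X \<Longrightarrow> \<exists>h \<in> hom C W XX. Comp C pr1 h = u \<and> Comp C pr2 h = v"
    using pr unfolding is_prod_def by blast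
  have prM: "\<And>W h1 h2. h1 \<in> hom C W XX \<Longrightarrow> h2 \<in> hom C W XX \<Longrightarrow> Comp C pr1 h1 = Comp C pr1 h2 \<Longrightarrow> Comp C pr2 h1 = Comp C pr2 h2 \<Longrightarrow> h1 = h2"
    using pr unfolding is_prod_def by blast
  obtain i' where i': "i' \<in> hom C I XX" "Comp C pr1 i' = s1" "Comp C pr2 i' = s2" using prU[OF s1 s2] by blast
  have i'm: "cat_mono C i'"
  proof (rule monoI[OF i'(1)])
    fix W u v assume u: "u \<in> hom C W I" and v: "v \<in> hom C W I" and e: "Comp C i' u = Comp C i' v"
    have "Comp C s1 u = Comp C s1 v" using assoc[OF u i'(1) pr1] assoc[OF v i'(1) pr1] e i' by simp
    moreover have "Comp C s2 u = Comp C s2 v" using assoc[OF u i'(1) pr2] assoc[OF v i'(1) pr2] e i' by simp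
    ultimately show "u = v" using jm u v by blast
  qed
  have a1: "Comp C s1 (Comp C q1 pi) \<in> hom C D X" using pi q1 s1 by blast
  have a2: "Comp C s2 q3 \<in> hom C D X" using q3 s2 by blast
  obtain k where k: "k \<in> hom C D XX" "Comp C pr1 k = Comp C s1 (Comp C q1 pi)" "Comp C pr2 k = Comp C s2 q3"
    using prU[OF a1 a2] by blast
  obtain T t tr where pbT: "is_pullback C k i' t tr" and t: "t \<in> hom C T D" and tr: "tr \<in> hom C T I"
    using pb_exists[OF k(1) i'(1)] by blast
  have cT: "Comp C k t = Comp C i' tr" using pb_comm[OF pbT] .
  have tm: "cat_mono C t"
  proof (rule monoI[OF t])
    fix W h1 h2 assume h1: "h1 \<in> hom C W T" and h2: "h2 \<in> hom C W T" and e: "Comp C t h1 = Comp C t h2"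
    have "Comp C i' (Comp C tr h1) = Comp C i' (Comp C tr h2)"
      using assoc[OF h1 tr i'(1)] assoc[OF h2 tr i'(1)] assoc[OF h1 t k(1)] assoc[OF h2 t k(1)] cT e by simp
    then have "Comp C tr h1 = Comp C tr h2" using monoD[OF i'm i'(1)] h1 h2 tr by blast
    then show "h1 = h2" using pb_un[OF pbT t h1 h2 e] by blast
  qed
  have fac: "\<exists>h \<in> hom C W T. Comp C t h = u"
    if u: "u \<in> hom C W D" and r: "r \<in> hom C W I" and e1: "Comp C s1 r = Comp C (Comp C s1 (Comp C q1 pi)) u"
      and e2: "Comp C s2 r = Comp C (Comp C s2 q3) u" for W u r
  proof -
    have ku: "Comp C k u \<in> hom C W XX" using u k by blast
    have ir: "Comp C i' r \<in> hom C W XX" using r i' by blast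
    have "Comp C pr1 (Comp C k u) = Comp C pr1 (Comp C i' r)"
      using assoc[OF u k(1) pr1] assoc[OF r i'(1) pr1] k i' e1 by simp
    moreover have "Comp C pr2 (Comp C k u) = Comp C pr2 (Comp C i' r)"
      using assoc[OF u k(1) pr2] assoc[OF r i'(1) pr2] k i' e2 by simp
    ultimately have "Comp C k u = Comp C i' r" using prM[OF ku ir] by blast
    then show ?thesis using pb_ex[OF pbT k(1) i'(1) t u r] by blast
  qed
  have q1pi: "Comp C q1 pi \<in> hom C D I" using pi q1 by blast
  have "Comp C (Comp C s1 (Comp C q1 pi)) sg = Comp C s1 q1"
    using assoc[OF sg(1) q1pi s1] assoc[OF sg(1) pi q1] sg(2) q1 by simp
  moreover have "Comp C (Comp C s2 q3) sg = Comp C s2 q1"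
    using assoc[OF sg(1) q3 s2] sg(3) pb_comm[OF pb1] by simp
  ultimately obtain s0 where s0: "s0 \<in> hom C P1 T" "Comp C t s0 = sg" using fac[OF sg(1) q1] by auto
  have cF: "Comp C pi f' = Comp C f p'" using pb_comm[OF pbF] .
  have "Comp C q1 (Comp C pi f') = p'" using cF assoc[OF p' f(1) q1] f p' by simp
  then have e1: "Comp C (Comp C q1 pi) f' = p'" using assoc[OF f' pi q1] by simp
  have "Comp C q2 (Comp C pi f') = p'" using cF assoc[OF p' f(1) q2] f p' by simp
  then have e2: "Comp C (Comp C q2 pi) f' = p'" using assoc[OF f' pi q2] by simp
  have q3f: "Comp C q3 f' \<in> hom C PP I" using f' q3 by blast
  have "Comp C (Comp C s1 (Comp C q1 pi)) f' = Comp C s1 p'" using assoc[OF f' q1pi s1] e1 by simp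
  also have "\<dots> = Comp C s1 (Comp C (Comp C q2 pi) f')" using e2 by simp
  also have "\<dots> = Comp C (Comp C (Comp C s1 q2) pi) f'" using assoc[OF f' pi q2] assoc[OF pi q2 s1] assoc[OF f' pi sq2]
     assoc[OF comp_hom[OF f' pi] q2 s1] by simp
  also have "\<dots> = Comp C s1 (Comp C q3 f')" using cD assoc[OF f' q3 s1] by simp
  finally have "Comp C s1 (Comp C q3 f') = Comp C (Comp C s1 (Comp C q1 pi)) f'" by simp
  moreover have "Comp C s2 (Comp C q3 f') = Comp C (Comp C s2 q3) f'" using assoc[OF f' q3 s2] .
  ultimately obtain gg where gg: "gg \<in> hom C PP T" "Comp C t gg = f'" using fac[OF f' q3f] by blast
  have "iso C t" using jse_mono[OF pi sg(1) sg(2) f(1) pbF f' p' t tm s0 gg] .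
  then obtain ti where ti: "ti \<in> hom C D T" "Comp C t ti = Idt C D" using isoD[OF _ t] by blast
  define r0 where "r0 = Comp C tr ti"
  have r0: "r0 \<in> hom C D I" unfolding r0_def using ti tr by blast
  have "Comp C i' r0 = k" unfolding r0_def using assoc[OF ti(1) tr i'(1)] cT[symmetric] assoc[OF ti(1) t k(1)] ti k by simp
  then have r01: "Comp C s1 r0 = Comp C s1 (Comp C q1 pi)" and r02: "Comp C s2 r0 = Comp C s2 q3"
    using assoc[OF r0 i'(1) pr1] assoc[OF r0 i'(1) pr2] i' k by simp_all
  obtain u1 where u1: "u1 \<in> hom C W P1" "Comp C q1 u1 = ra" "Comp C q2 u1 = rb"
    using pb_ex[OF pb1 s2 s2 q1 ra rb eab] by blast
  have "Comp C (Comp C s1 q2) u1 = Comp C s1 rc" using assoc[OF u1(1) q2 s1] u1 ebc by simp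
  then obtain u where u: "u \<in> hom C W D" "Comp C pi u = u1" "Comp C q3 u = rc"
    using pb_ex[OF pbD sq2 s1 pi u1(1) rc] by blast
  have "Comp C s1 (Comp C r0 u) = Comp C s1 ra"
    using assoc[OF u(1) r0 s1] r01 assoc[OF u(1) q1pi s1] assoc[OF u(1) pi q1] u u1 by simp
  moreover have "Comp C s2 (Comp C r0 u) = Comp C s2 rc"
    using assoc[OF u(1) r0 s2] r02 assoc[OF u(1) q3 s2] u by simp
  moreover have "Comp C r0 u \<in> hom C W I" using u r0 by blast
  ultimately show ?thesis by blast
qed

end


context sa begin

definition is_coker where
  "is_coker q m A B Q \<longleftrightarrow> m \<in> hom C A B \<and> q \<in> hom C B Q \<and> Comp C q m = zm A Q \<and> epi q \<and>
     (\<forall>Z g. g \<in> hom C B Z \<longrightarrow> Comp C g m = zm A Z \<longrightarrow> (\<exists>h \<in> hom C Q Z. Comp C h q = g))"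

lemma coker_exists: "m \<in> hom C A B \<Longrightarrow> \<exists>Q q. is_coker q m A B Q"
proof -
  assume m: "m \<in> hom C A B"
  have A: "A \<in> Obj C" and B: "B \<in> Obj C" using m hom_dom_obj hom_cod_obj by blast+
  obtain S i1 i2 where i1: "i1 \<in> hom C B S" and i2: "i2 \<in> hom C A S"
    and cpU: "\<forall>Z u v. u \<in> hom C B Z \<longrightarrow> v \<in> hom C A Z \<longrightarrow> (\<exists>h \<in> hom C S Z. Comp C h i1 = u \<and> Comp C h i2 = v)"
    and cpM: "\<forall>Z h1 h2. h1 \<in> hom C S Z \<longrightarrow> h2 \<in> hom C S Z \<longrightarrow> Comp C h1 i1 = Comp C h2 i1 \<longrightarrow> Comp C h1 i2 = Comp C h2 i2 \<longrightarrow> h1 = h2"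
    using coprod_ex[OF B A] by (elim exE conjE) (rule that; assumption)
  have zAB: "zm A B \<in> hom C A B" using zm_hom[OF A B] .
  obtain a where a: "a \<in> hom C S B" "Comp C a i1 = Idt C B" "Comp C a i2 = m" using cpU id_hom[OF B] m by blast
  obtain b where b: "b \<in> hom C S B" "Comp C b i1 = Idt C B" "Comp C b i2 = zm A B" using cpU id_hom[OF B] zAB by blast
  obtain BB pr1 pr2 where pr: "is_prod pr1 pr2 BB B B" using prod_exists[OF B B] by blast
  have pr1: "pr1 \<in> hom C BB B" and pr2: "pr2 \<in> hom C BB B" using pr unfolding is_prod_def by auto
  have prU: "\<And>W u v. u \<in> hom C W B \<Longrightarrow> v \<in> hom C W B \<Longrightarrow> \<exists>h \<in> hom C W BB. Comp C pr1 h = u \<and> Comp C pr2 h = v"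
    using pr unfolding is_prod_def by blast
  have prM: "\<And>W h1 h2. h1 \<in> hom C W BB \<Longrightarrow> h2 \<in> hom C W BB \<Longrightarrow> Comp C pr1 h1 = Comp C pr1 h2 \<Longrightarrow> Comp C pr2 h1 = Comp C pr2 h2 \<Longrightarrow> h1 = h2"
    using pr unfolding is_prod_def by blast
  obtain g0 where g0: "g0 \<in> hom C S BB" "Comp C pr1 g0 = a" "Comp C pr2 g0 = b" using prU[OF a(1) b(1)] by blast
  obtain I r i where r: "r \<in> hom C S I" and i: "i \<in> hom C I BB" and ir: "Comp C i r = g0"
    and rr: "regular_epi C r" and im: "cat_mono C i"
    using image_fact[OF g0(1)] by blast
  define s1 where "s1 = Comp C pr1 i"
  define s2 where "s2 = Comp C pr2 i"
  have s1: "s1 \<in> hom C I B" and s2: "s2 \<in> hom C I B" unfolding s1_def s2_def using i pr1 pr2 by blast+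
  have s1r: "Comp C s1 r = a" unfolding s1_def using assoc[OF r i pr1] ir g0 by simp
  have s2r: "Comp C s2 r = b" unfolding s2_def using assoc[OF r i pr2] ir g0 by simp
  have jm: "\<forall>W u v. u \<in> hom C W I \<longrightarrow> v \<in> hom C W I \<longrightarrow> Comp C s1 u = Comp C s1 v \<longrightarrow> Comp C s2 u = Comp C s2 v \<longrightarrow> u = v"
  proof (intro allI impI)
    fix W u v assume u: "u \<in> hom C W I" and v: "v \<in> hom C W I" and e1: "Comp C s1 u = Comp C s1 v" and e2: "Comp C s2 u = Comp C s2 v"
    have "Comp C pr1 (Comp C i u) = Comp C pr1 (Comp C i v)" using e1 assoc[OF u i pr1] assoc[OF v i pr1] unfolding s1_def by simp
    moreover have "Comp C pr2 (Comp C i u) = Comp C pr2 (Comp C i v)" using e2 assoc[OF u i pr2] assoc[OF v i pr2] unfolding s2_def by simp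
    ultimately have "Comp C i u = Comp C i v" using prM u v i by blast
    then show "u = v" using monoD[OF im i u v] by blast
  qed
  define dl where "dl = Comp C r i1"
  have dl: "dl \<in> hom C B I" unfolding dl_def using i1 r by blast
  have s1d: "Comp C s1 dl = Idt C B" unfolding dl_def using assoc[OF i1 r s1] s1r a by simp
  have s2d: "Comp C s2 dl = Idt C B" unfolding dl_def using assoc[OF i1 r s2] s2r b by simp
  have I: "I \<in> Obj C" using r hom_cod_obj by blast
  have ER: "equiv_rel C s1 s2" unfolding equiv_rel_def
  proof (intro conjI ballI impI allI)
    show "s1 \<in> Arr C" "s2 \<in> Arr C" "Dom C s1 = Dom C s2" "Cod C s1 = Cod C s2" using s1 s2 by (auto simp: hom_def)
  next
    fix x u v assume "x \<in> Obj C" "u \<in> hom C x (Dom C s1)" "v \<in> hom C x (Dom C s1)" "Comp C s1 u = Comp C s1 v \<and> Comp C s2 u = Comp C s2 v"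
    then show "u = v" using jm s1 by (auto simp: hom_def)
  next
    show "\<exists>d\<in>hom C (Cod C s1) (Dom C s1). Comp C s1 d = Idt C (Cod C s1) \<and> Comp C s2 d = Idt C (Cod C s1)"
      using dl s1d s2d s1 by (auto simp: hom_def)
  next
    have ra: "Comp C dl s2 \<in> hom C I I" and rc: "Comp C dl s1 \<in> hom C I I" using dl s1 s2 by blast+
    have e1: "Comp C s2 (Comp C dl s2) = Comp C s2 (Idt C I)" using assoc[OF s2 dl s2] s2d s2 by simp
    have e2: "Comp C s1 (Idt C I) = Comp C s1 (Comp C dl s1)" using assoc[OF s1 dl s1] s1d s1 by simp
    obtain t where "t \<in> hom C I I" "Comp C s1 t = Comp C s1 (Comp C dl s2)" "Comp C s2 t = Comp C s2 (Comp C dl s1)"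
      using difun[OF s1 s2 jm ra id_hom[OF I] rc e1 e2] by (elim bexE conjE) (rule that; assumption)
    moreover have "Comp C s1 (Comp C dl s2) = s2" using assoc[OF s2 dl s1] s1d s2 by simp
    moreover have "Comp C s2 (Comp C dl s1) = s1" using assoc[OF s1 dl s2] s2d s1 by simp
    ultimately show "\<exists>s\<in>hom C (Dom C s1) (Dom C s1). Comp C s1 s = s2 \<and> Comp C s2 s = s1" using s1 by (auto simp: hom_def)
  next
    fix p1 p2 assume pb: "is_pullback C s2 s1 p1 p2"
    define W where "W = Dom C p1"
    have p1: "p1 \<in> hom C W I" and p2: "p2 \<in> hom C W I" using pb s1 s2 unfolding is_pullback_def W_def by (auto simp: hom_def)
    have c: "Comp C s2 p1 = Comp C s1 p2" using pb_comm[OF pb] .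
    have sp: "Comp C s2 p1 \<in> hom C W B" using p1 s2 by blast
    have rb: "Comp C dl (Comp C s2 p1) \<in> hom C W I" using sp dl by blast
    have e1: "Comp C s2 p1 = Comp C s2 (Comp C dl (Comp C s2 p1))" using assoc[OF sp dl s2] s2d sp by simp
    have e2: "Comp C s1 (Comp C dl (Comp C s2 p1)) = Comp C s1 p2" using assoc[OF sp dl s1] s1d sp c by simp
    obtain t where "t \<in> hom C W I" "Comp C s1 t = Comp C s1 p1" "Comp C s2 t = Comp C s2 p2"
      using difun[OF s1 s2 jm p1 rb p2 e1 e2] by (elim bexE conjE) (rule that; assumption)
    then show "\<exists>t\<in>hom C (Dom C p1) (Dom C s1). Comp C s1 t = Comp C s1 p1 \<and> Comp C s2 t = Comp C s2 p2"
      using s1 W_def by (auto simp: hom_def)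
  qed
  obtain F where "is_pullback C F F s1 s2" using exact ER unfolding exact_cat_def by blast
  then obtain q where co: "is_coequalizer C q s1 s2" using regular unfolding regular_cat_def by blast
  define Q where "Q = Cod C q"
  have q: "q \<in> hom C B Q" using co s1 unfolding is_coequalizer_def Q_def by (auto simp: hom_def)
  note cd = coeqD[OF co q]
  have "Comp C q m = Comp C q (Comp C s1 (Comp C r i2))" using assoc[OF i2 r s1] s1r a by simp
  also have "\<dots> = Comp C (Comp C q s1) (Comp C r i2)" using assoc[OF comp_hom[OF i2 r] s1 q] .
  also have "\<dots> = Comp C (Comp C q s2) (Comp C r i2)" using cd by simp
  also have "\<dots> = Comp C q (Comp C s2 (Comp C r i2))" using assoc[OF comp_hom[OF i2 r] s2 q] by simp
  also have "\<dots> = zm A Q" using assoc[OF i2 r s2] s2r b q A by simp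
  finally have qm: "Comp C q m = zm A Q" .
  have U: "\<forall>Z g. g \<in> hom C B Z \<longrightarrow> Comp C g m = zm A Z \<longrightarrow> (\<exists>h \<in> hom C Q Z. Comp C h q = g)"
  proof (intro allI impI)
    fix Z g assume g: "g \<in> hom C B Z" and gm: "Comp C g m = zm A Z"
    have ga: "Comp C g a \<in> hom C S Z" and gb: "Comp C g b \<in> hom C S Z" using g a b by blast+
    have "Comp C (Comp C g a) i1 = Comp C (Comp C g b) i1" using assoc[OF i1 a(1) g] assoc[OF i1 b(1) g] a b g by simp
    moreover have "Comp C (Comp C g a) i2 = Comp C (Comp C g b) i2" using assoc[OF i2 a(1) g] assoc[OF i2 b(1) g] a b g gm A by simp
    ultimately have gab: "Comp C g a = Comp C g b" using cpM ga gb by blast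
    have "Comp C (Comp C g s1) r = Comp C (Comp C g s2) r" using assoc[OF r s1 g] assoc[OF r s2 g] s1r s2r gab by simp
    then have "Comp C g s1 = Comp C g s2" using epiD[OF regepi_epi[OF rr] r] s1 s2 g by blast
    then show "\<exists>h \<in> hom C Q Z. Comp C h q = g" using cd g by blast
  qed
  have "is_coker q m A B Q" unfolding is_coker_def using m q qm coeq_epi[OF co] U by blast
  then show ?thesis by blast
qed

end


context sa begin

lemma coker_factor: "is_coker q m A B Q \<Longrightarrow> g \<in> hom C B Z \<Longrightarrow> Comp C g m = zm A Z \<Longrightarrow> \<exists>h \<in> hom C Q Z. Comp C h q = g"
  unfolding is_coker_def by blast

lemma coker_regepi: "is_coker q m A B Q \<Longrightarrow> regular_epi C q"
proof -
  assume ck: "is_coker q m A B Q"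
  have m: "m \<in> hom C A B" and q: "q \<in> hom C B Q" and qm: "Comp C q m = zm A Q" and ep: "epi q"
    using ck unfolding is_coker_def by auto
  have A: "A \<in> Obj C" and B: "B \<in> Obj C" and Q: "Q \<in> Obj C" using m q hom_dom_obj hom_cod_obj by blast+
  have z: "zm A B \<in> hom C A B" using zm_hom[OF A B] .
  have "is_coequalizer C q m (zm A B)" unfolding is_coequalizer_def
  proof (intro conjI ballI impI)
    show "m \<in> Arr C" "zm A B \<in> Arr C" "q \<in> Arr C" "Dom C m = Dom C (zm A B)" "Cod C m = Cod C (zm A B)" "Dom C q = Cod C m"
      using m z q by (auto simp: hom_def)
    show "Comp C q m = Comp C q (zm A B)" using qm q A by simp
    fix g assume g: "g \<in> Arr C" and gg: "Dom C g = Cod C m \<and> Comp C g m = Comp C g (zm A B)"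
    have gh: "g \<in> hom C B (Cod C g)" using g gg m by (auto simp: hom_def)
    have "Comp C g m = zm A (Cod C g)" using gg gh A by simp
    then obtain h where h: "h \<in> hom C Q (Cod C g)" "Comp C h q = g" using coker_factor[OF ck gh] by blast
    show "\<exists>!h. h \<in> hom C (Cod C q) (Cod C g) \<and> Comp C h q = g"
    proof
      show "h \<in> hom C (Cod C q) (Cod C g) \<and> Comp C h q = g" using h q by (auto simp: hom_def)
      fix h' assume "h' \<in> hom C (Cod C q) (Cod C g) \<and> Comp C h' q = g"
      then show "h' = h" using epiD[OF ep q] h q by (auto simp: hom_def)
    qed
  qed
  then show ?thesis unfolding regular_epi_def by blast
qed

lemma kernel_of_coker:
  assumes ker: "is_kernel C n f0" and n: "n \<in> hom C K B" and ck: "is_coker c n K B D"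
    and g: "g \<in> hom C W B" and cg: "Comp C c g = zm W D"
  shows "\<exists>y \<in> hom C W K. Comp C n y = g"
proof -
  have f0: "f0 \<in> hom C B (Cod C f0)" using ker n unfolding is_kernel_def by (auto simp: hom_def)
  have c: "c \<in> hom C B D" using ck unfolding is_coker_def by auto
  have W: "W \<in> Obj C" using g hom_dom_obj by blast
  have "Comp C f0 n = zm K (Cod C f0)" using is_kernelD[OF ker n f0] by blast
  then obtain t where t: "t \<in> hom C D (Cod C f0)" "Comp C t c = f0" using coker_factor[OF ck f0] by blast
  have "Comp C f0 g = zm W (Cod C f0)" using t assoc[OF g c t(1)] cg W by simp
  then show ?thesis using conjunct2[OF is_kernelD[OF ker n f0], rule_format, OF g] by blast
qed

lemma normal_homs: "normal_mono C k \<Longrightarrow> \<exists>f. is_kernel C k f \<and> k \<in> hom C (Dom C k) (Cod C k) \<and> f \<in> hom C (Cod C k) (Cod C f)"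
proof -
  assume "normal_mono C k"
  then obtain f where ker: "is_kernel C k f" unfolding normal_mono_def by blast
  then have "k \<in> Arr C" "f \<in> Arr C" "Cod C k = Dom C f" unfolding is_kernel_def by blast+
  then have "k \<in> hom C (Dom C k) (Cod C k) \<and> f \<in> hom C (Cod C k) (Cod C f)" by (simp add: hom_def)
  then show ?thesis using ker by blast
qed

lemma ii_i:
  assumes H2: "\<forall>k e k' e'. normal_mono C k \<and> regular_epi C e \<and> is_pushout C k e k' e' \<longrightarrow> cat_mono C k'"
    and n1: "normal_mono C k1" and n2: "normal_mono C k2" and cd: "Cod C k1 = Dom C k2"
  shows "normal_mono C (Comp C k2 k1)"
proof -
  obtain f1 where ker1: "is_kernel C k1 f1" and k1: "k1 \<in> hom C (Dom C k1) (Cod C k1)" and f1: "f1 \<in> hom C (Cod C k1) (Cod C f1)"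
    using normal_homs[OF n1] by blast
  obtain f2 where ker2: "is_kernel C k2 f2" and k2: "k2 \<in> hom C (Dom C k2) (Cod C k2)" and f2: "f2 \<in> hom C (Cod C k2) (Cod C f2)"
    using normal_homs[OF n2] by blast
  define A where "A = Dom C k1"
  define B where "B = Cod C k1"
  define Cc where "Cc = Cod C k2"
  have k1: "k1 \<in> hom C A B" and k2: "k2 \<in> hom C B Cc" and f2: "f2 \<in> hom C Cc (Cod C f2)"
    using k1 k2 f2 cd unfolding A_def B_def Cc_def by auto
  have A: "A \<in> Obj C" using k1 hom_dom_obj by blast
  have kk: "Comp C k2 k1 \<in> hom C A Cc" using k1 k2 by blast
  obtain Q q1 where ck1: "is_coker q1 k1 A B Q" using coker_exists[OF k1] by blast
  obtain D c where ck: "is_coker c (Comp C k2 k1) A Cc D" using coker_exists[OF kk] by blast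
  have q1: "q1 \<in> hom C B Q" and q1k1: "Comp C q1 k1 = zm A Q" and epq1: "epi q1" using ck1 unfolding is_coker_def by auto
  have c: "c \<in> hom C Cc D" and ckk: "Comp C c (Comp C k2 k1) = zm A D" and epc: "epi c" using ck unfolding is_coker_def by auto
  have ck2: "Comp C c k2 \<in> hom C B D" using k2 c by blast
  have "Comp C (Comp C c k2) k1 = zm A D" using assoc[OF k1 k2 c] ckk by simp
  then obtain c' where c': "c' \<in> hom C Q D" "Comp C c' q1 = Comp C c k2" using coker_factor[OF ck1 ck2] by blast
  have po: "is_pushout C k2 q1 c' c" unfolding is_pushout_def
  proof (intro conjI ballI impI)
    show "k2 \<in> Arr C" "q1 \<in> Arr C" "c' \<in> Arr C" "c \<in> Arr C" "Dom C k2 = Dom C q1" "Dom C c' = Cod C q1"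
      "Dom C c = Cod C k2" "Cod C c' = Cod C c" using k2 q1 c' c by (auto simp: hom_def)
    show "Comp C c k2 = Comp C c' q1" using c' by simp
    fix x u v assume x: "x \<in> Obj C" and u: "u \<in> hom C (Cod C k2) x" and v: "v \<in> hom C (Cod C q1) x"
      and uv: "Comp C u k2 = Comp C v q1"
    have u': "u \<in> hom C Cc x" and v': "v \<in> hom C Q x" using u v k2 q1 by (auto simp: hom_def)
    have "Comp C u (Comp C k2 k1) = zm A x" using assoc[OF k1 k2 u'] uv assoc[OF k1 q1 v'] q1k1 v' A by simp
    then obtain h where h: "h \<in> hom C D x" "Comp C h c = u" using coker_factor[OF ck u'] by blast
    have hc': "Comp C h c' \<in> hom C Q x" using c'(1) h(1) by blast
    have "Comp C (Comp C h c') q1 = Comp C v q1" using assoc[OF q1 c'(1) h(1)] c' assoc[OF k2 c h(1)] h uv by simp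
    then have hv: "Comp C h c' = v" using epiD[OF epq1 q1 hc' v'] by blast
    show "\<exists>!h. h \<in> hom C (Cod C c') x \<and> Comp C h c = u \<and> Comp C h c' = v"
    proof
      show "h \<in> hom C (Cod C c') x \<and> Comp C h c = u \<and> Comp C h c' = v" using h hv c' by (auto simp: hom_def)
      fix h' assume "h' \<in> hom C (Cod C c') x \<and> Comp C h' c = u \<and> Comp C h' c' = v"
      then show "h' = h" using epiD[OF epc c] h c' by (auto simp: hom_def)
    qed
  qed
  have mc': "cat_mono C c'" using H2 n2 coker_regepi[OF ck1] po by blast
  have mk: "cat_mono C (Comp C k2 k1)" using mono_comp[OF kernel_mono[OF ker1] kernel_mono[OF ker2] k1 k2] .
  have "is_kernel C (Comp C k2 k1) c"
  proof (rule is_kernelI[OF kk c mk ckk])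
    fix W g assume g: "g \<in> hom C W Cc" and cg: "Comp C c g = zm W D"
    have W: "W \<in> Obj C" using g hom_dom_obj by blast
    have "Comp C f2 (Comp C k2 k1) = zm A (Cod C f2)" using assoc[OF k1 k2 f2] is_kernelD[OF ker2 k2 f2] k1 f2 hom_cod_obj by simp
    then obtain t where t: "t \<in> hom C D (Cod C f2)" "Comp C t c = f2" using coker_factor[OF ck f2] by blast
    have "Comp C f2 g = zm W (Cod C f2)" using t assoc[OF g c t(1)] cg W by simp
    then obtain g' where g': "g' \<in> hom C W B" "Comp C k2 g' = g" using conjunct2[OF is_kernelD[OF ker2 k2 f2], rule_format, OF g] by blast
    have q1g: "Comp C q1 g' \<in> hom C W Q" using g' q1 by blast
    have "Comp C c' (Comp C q1 g') = zm W D" using assoc[OF g'(1) q1 c'(1)] c' assoc[OF g'(1) k2 c] g' cg by simp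
    then have "Comp C q1 g' = zm W Q" using mono_zero[OF mc' c'(1) q1g] by blast
    have "\<exists>y \<in> hom C W A. Comp C k1 y = g'" using kernel_of_coker[OF ker1 k1 ck1 g'(1)] \<open>Comp C q1 g' = zm W Q\<close> by blast
    then obtain y where y: "y \<in> hom C W A" "Comp C k1 y = g'" by blast
    show "\<exists>h \<in> hom C W A. Comp C (Comp C k2 k1) h = g" using y assoc[OF y(1) k1 k2] g' by auto
  qed
  then show ?thesis unfolding normal_mono_def by blast
qed

lemma i_ii:
  assumes H1: "\<forall>k1 k2. normal_mono C k1 \<and> normal_mono C k2 \<and> Cod C k1 = Dom C k2 \<longrightarrow> normal_mono C (Comp C k2 k1)"
    and nk: "normal_mono C k" and re: "regular_epi C e" and po: "is_pushout C k e k' e'"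
  shows "cat_mono C k'"
proof -
  obtain f where ker: "is_kernel C k f" and k0: "k \<in> hom C (Dom C k) (Cod C k)"
    using normal_homs[OF nk] by blast
  define A where "A = Dom C k"
  define B where "B = Cod C k"
  define E where "E = Cod C e"
  define P where "P = Cod C k'"
  have pd: "e \<in> Arr C" "k' \<in> Arr C" "e' \<in> Arr C" "Dom C k = Dom C e" "Dom C k' = Cod C e" "Dom C e' = Cod C k"
    "Cod C k' = Cod C e'" "Comp C e' k = Comp C k' e"
    using po unfolding is_pushout_def by auto
  have poU: "\<forall>x \<in> Obj C. \<forall>u \<in> hom C (Cod C k) x. \<forall>v \<in> hom C (Cod C e) x.
        Comp C u k = Comp C v e \<longrightarrow> (\<exists>!h. h \<in> hom C (Cod C k') x \<and> Comp C h e' = u \<and> Comp C h k' = v)"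
    using po unfolding is_pushout_def by blast
  have k: "k \<in> hom C A B" using k0 unfolding A_def B_def .
  have e: "e \<in> hom C A E" using pd unfolding A_def E_def by (auto simp: hom_def)
  have k': "k' \<in> hom C E P" using pd unfolding E_def P_def by (auto simp: hom_def)
  obtain K j where j: "j \<in> hom C K A" and kj: "is_kernel C j e" using ker_exists[OF e] by blast
  have "normal_mono C (Comp C k j)" using H1 nk kj k j unfolding normal_mono_def by (auto simp: hom_def)
  then obtain f0 where ker0: "is_kernel C (Comp C k j) f0" unfolding normal_mono_def by blast
  have kjh: "Comp C k j \<in> hom C K B" using j k by blast
  obtain D c where ck: "is_coker c (Comp C k j) K B D" using coker_exists[OF kjh] by blast
  have c: "c \<in> hom C B D" and ckj: "Comp C c (Comp C k j) = zm K D" using ck unfolding is_coker_def by auto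
  have D: "D \<in> Obj C" using c hom_cod_obj by blast
  have ckh: "Comp C c k \<in> hom C A D" using k c by blast
  have "Comp C (Comp C c k) j = zm K D" using assoc[OF j k c] ckj by simp
  then obtain w where w: "w \<in> hom C E D" "Comp C w e = Comp C c k" using regepi_coker_ker[OF e re j kj ckh] by blast
  have mk: "cat_mono C k" using kernel_mono[OF ker] .
  have mw: "cat_mono C w"
  proof (rule mono_by_kernel[OF w(1)])
    fix W x assume x: "x \<in> hom C W E" and wx: "Comp C w x = zm W D"
    obtain W1 e2 x2 where pb: "is_pullback C x e e2 x2" and e2: "e2 \<in> hom C W1 W" and x2: "x2 \<in> hom C W1 A"
      using pb_exists[OF x e] by blast
    have W1: "W1 \<in> Obj C" using e2 hom_dom_obj by blast
    have ep2: "epi e2" using regepi_epi[OF regepi_pb[OF pb re]] .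
    have cpb: "Comp C x e2 = Comp C e x2" using pb_comm[OF pb] .
    have kx2: "Comp C k x2 \<in> hom C W1 B" using x2 k by blast
    have "Comp C c (Comp C k x2) = Comp C (Comp C w e) x2" using assoc[OF x2 k c] w by simp
    also have "\<dots> = Comp C w (Comp C x e2)" using assoc[OF x2 e w(1)] cpb by simp
    also have "\<dots> = zm W1 D" using assoc[OF e2 x w(1)] wx e2 D by simp
    finally obtain y where y: "y \<in> hom C W1 K" "Comp C (Comp C k j) y = Comp C k x2"
      using kernel_of_coker[OF ker0 kjh ck kx2] by blast
    have jy: "Comp C j y \<in> hom C W1 A" using y j by blast
    have "Comp C k (Comp C j y) = Comp C k x2" using assoc[OF y(1) j k] y by simp
    then have "Comp C j y = x2" using monoD[OF mk k jy x2] by blast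
    then have "Comp C x e2 = zm W1 E" using cpb assoc[OF y(1) j e] is_kernelD[OF kj j e] y(1) hom_cod_obj[OF e] by simp
    then show "x = zm W E" using epi_zero[OF ep2 e2 x] by blast
  qed
  have u: "c \<in> hom C (Cod C k) D" and v: "w \<in> hom C (Cod C e) D" using c w k e by (auto simp: hom_def B_def E_def)
  have "\<exists>!h. h \<in> hom C (Cod C k') D \<and> Comp C h e' = c \<and> Comp C h k' = w"
    using poU[rule_format, OF D u v] w by simp
  then obtain h where h: "h \<in> hom C P D" "Comp C h k' = w" unfolding P_def by blast
  show ?thesis using mono_cancel[of h k' E P D] h k' mw by simp
qed

end


theorem mainTheorem15:
  fixes C :: "('o, 'a) cat"
  assumes "semi_abelian C"
  shows "(\<forall>k1 k2. normal_mono C k1 \<and> normal_mono C k2 \<and> Cod C k1 = Dom C k2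
              \<longrightarrow> normal_mono C (Comp C k2 k1))
         \<longleftrightarrow>
         (\<forall>k e k' e'. normal_mono C k \<and> regular_epi C e \<and> is_pushout C k e k' e'
              \<longrightarrow> cat_mono C k')"
proof -
  interpret sa C by (rule sa.intro) (rule assms)
  show ?thesis
  proof
    assume H1: "\<forall>k1 k2. normal_mono C k1 \<and> normal_mono C k2 \<and> Cod C k1 = Dom C k2
              \<longrightarrow> normal_mono C (Comp C k2 k1)"
    show "\<forall>k e k' e'. normal_mono C k \<and> regular_epi C e \<and> is_pushout C k e k' e' \<longrightarrow> cat_mono C k'"
    proof (intro allI impI)
      fix k e k' e' assume "normal_mono C k \<and> regular_epi C e \<and> is_pushout C k e k' e'"
      then show "cat_mono C k'" using i_ii[OF H1] by blast
    qed
  next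
    assume H2: "\<forall>k e k' e'. normal_mono C k \<and> regular_epi C e \<and> is_pushout C k e k' e' \<longrightarrow> cat_mono C k'"
    show "\<forall>k1 k2. normal_mono C k1 \<and> normal_mono C k2 \<and> Cod C k1 = Dom C k2
              \<longrightarrow> normal_mono C (Comp C k2 k1)"
    proof (intro allI impI)
      fix k1 k2 assume "normal_mono C k1 \<and> normal_mono C k2 \<and> Cod C k1 = Dom C k2"
      then show "normal_mono C (Comp C k2 k1)" using ii_i[OF H2] by blast
    qed
  qed
qed

end
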